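(* Let $S$ be the multiset consisting of $2$ copies of each odd positive integer together with $2$ additional copies of each odd positive multiple of $11$, and let $T$ be the multiset consisting of $2$ copies of each even positive integer together with $2$ additional copies of each even positive multiple of $11$ (all copies distinct). Let $D_S(N)$ be the number of partitions of $N$ into distinct elements of $S$ having an odd number of parts, and $D_T(N)$ the number of partitions of $N$ into distinct elements of $T$. Then for every $N\ge 3$, $D_S(N)=2D_T(N-3)$.
   Context: A partition of $N$ into distinct elements of a multiset is a finite set of distinct elements of it (different copies of the same integer count as distinct elements) whose values sum to $N$. $D_T(0)=1$. *)

theory Defs
  imports Main
begin

(* A multiset of positive integers with distinguishable copies is modelled as a set of
   pairs (value, copy index): the element (n, c) is the c-th copy of n. *)

definition S_elems :: "(nat \<times> nat) set" where
  "S_elems = {(n, c). n > 0 \<and> odd n \<and> c < (if 11 dvd n then 4 else 2)}"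

definition T_elems :: "(nat \<times> nat) set" where
  "T_elems = {(n, c). n > 0 \<and> even n \<and> c < (if 11 dvd n then 4 else 2)}"

definition distinct_parts :: "(nat \<times> nat) set \<Rightarrow> nat \<Rightarrow> (nat \<times> nat) set set" where
  "distinct_parts M N = {P. P \<subseteq> M \<and> finite P \<and> (\<Sum>x\<in>P. fst x) = N}"

definition D_S :: "nat \<Rightarrow> nat" where
  "D_S N = card {P \<in> distinct_parts S_elems N. odd (card P)}"

definition D_T :: "nat \<Rightarrow> nat" where
  "D_T N = card (distinct_parts T_elems N)"

end

theory Submission
  imports Defs "HOL-Computational_Algebra.Formal_Power_Series"
begin
unbundle fps_syntax



definition dil :: "nat \<Rightarrow> 'a::comm_ring_1 fps \<Rightarrow> 'a fps" where
  "dil c f = Abs_fps (\<lambda>n. if c dvd n then f $ (n div c) else 0)"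

lemma dil_nth: "dil c f $ n = (if c dvd n then f $ (n div c) else 0)"
  by (simp add: dil_def)

lemma dil_add: "dil c (f + g) = dil c f + dil c g"
  by (rule fps_ext) (simp add: dil_nth)

lemma dil_diff: "dil c (f - g) = dil c f - dil c g"
  by (rule fps_ext) (simp add: dil_nth)

lemma dil_one: "c > 0 \<Longrightarrow> dil c 1 = 1"
  by (rule fps_ext) (auto simp: dil_nth)

lemma dil_mult:
  assumes c: "c > 0"
  shows "dil c (f * g) = dil c f * dil c g"
proof (rule fps_ext)
  fix n
  have rhs: "(dil c f * dil c g) $ n =
        (\<Sum>i=0..n. (if c dvd i then f $ (i div c) else 0) * (if c dvd (n-i) then g $ ((n-i) div c) else 0))"
    by (simp add: fps_mult_nth dil_nth)
  show "dil c (f * g) $ n = (dil c f * dil c g) $ n"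
  proof (cases "c dvd n")
    case False
    have "(if c dvd i then f $ (i div c) else 0) * (if c dvd (n-i) then g $ ((n-i) div c) else 0) = 0"
      if "i \<in> {0..n}" for i
    proof -
      have "\<not> (c dvd i \<and> c dvd (n - i))"
        using False that by (metis atLeastAtMost_iff dvd_add le_add_diff_inverse)
      then show ?thesis by auto
    qed
    then show ?thesis using False rhs by (simp add: dil_nth)
  next
    case True
    then obtain m where m: "n = c * m" by auto
    let ?F = "\<lambda>i. (if c dvd i then f $ (i div c) else 0) * (if c dvd (n-i) then g $ ((n-i) div c) else 0)"
    have "(\<Sum>i=0..n. ?F i) = (\<Sum>i\<in>(\<lambda>j. c*j) ` {0..m}. ?F i)"
    proof (rule sum.mono_neutral_right)
      show "(\<lambda>j. c*j) ` {0..m} \<subseteq> {0..n}" using m c by auto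
      show "\<forall>i\<in>{0..n} - (\<lambda>j. c*j) ` {0..m}. ?F i = 0"
      proof
        fix i assume i: "i \<in> {0..n} - (\<lambda>j. c*j) ` {0..m}"
        show "?F i = 0"
        proof (cases "c dvd i")
          case True
          then obtain j where "i = c*j" by auto
          with i m c have False by (auto simp: image_iff)
          then show ?thesis ..
        qed simp
      qed
    qed simp
    also have "\<dots> = (\<Sum>j=0..m. ?F (c*j))"
      by (subst sum.reindex) (use c in \<open>auto simp: inj_on_def\<close>)
    also have "\<dots> = (\<Sum>j=0..m. f $ j * g $ (m - j))"
    proof (rule sum.cong)
      fix j assume "j \<in> {0..m}"
      then have "n - c*j = c*(m-j)" using m by (simp add: diff_mult_distrib2)
      then show "?F (c*j) = f $ j * g $ (m - j)" using c by simp
    qed simp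
    finally show ?thesis using rhs True m c by (simp add: dil_nth fps_mult_nth)
  qed
qed

lemma dil_X_power: "c > 0 \<Longrightarrow> dil c (fps_X ^ k) = fps_X ^ (c*k)"
  by (rule fps_ext) (auto simp: dil_nth)

lemma dil_const: "c > 0 \<Longrightarrow> dil c (fps_const a) = fps_const a"
  by (rule fps_ext) (auto simp: dil_nth)

lemma dil_prod: "c > 0 \<Longrightarrow> dil c (\<Prod>x\<in>F. f x) = (\<Prod>x\<in>F. dil c (f x))"
  by (induction F rule: infinite_finite_induct) (auto simp: dil_one dil_mult)

lemma dil_dil: "c > 0 \<Longrightarrow> d > 0 \<Longrightarrow> dil c (dil d f) = dil (c*d) f"
  apply (rule fps_ext)
  apply (auto simp: dil_nth)
  done

lemma dil_1: "dil 1 f = f"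
  by (rule fps_ext) (simp add: dil_nth)



definition fac :: "('b \<Rightarrow> 'a::comm_ring_1) \<Rightarrow> ('b \<Rightarrow> nat) \<Rightarrow> 'b \<Rightarrow> 'a fps" where
  "fac w v u = 1 + fps_const (w u) * fps_X ^ v u"

definition gfw :: "'b set \<Rightarrow> ('b \<Rightarrow> nat) \<Rightarrow> ('b \<Rightarrow> 'a::comm_ring_1) \<Rightarrow> 'a fps" where
  "gfw U v w = Abs_fps (\<lambda>n. (\<Prod>u\<in>{u\<in>U. v u \<le> n}. fac w v u) $ n)"

definition wfs :: "'b set \<Rightarrow> ('b \<Rightarrow> nat) \<Rightarrow> bool" where
  "wfs U v \<longleftrightarrow> (\<forall>u\<in>U. 0 < v u) \<and> (\<forall>n. finite {u\<in>U. v u \<le> n})"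

definition onemod :: "nat \<Rightarrow> 'a::comm_ring_1 fps \<Rightarrow> bool" where
  "onemod n f \<longleftrightarrow> f $ 0 = 1 \<and> (\<forall>j. 0 < j \<and> j \<le> n \<longrightarrow> f $ j = 0)"

lemma onemod_one: "onemod n 1"
  by (simp add: onemod_def)

lemma onemod_mult: "onemod n f \<Longrightarrow> onemod n g \<Longrightarrow> onemod n (f * g)"
  unfolding onemod_def
proof (intro conjI allI impI)
  assume f: "f $ 0 = 1 \<and> (\<forall>j. 0 < j \<and> j \<le> n \<longrightarrow> f $ j = 0)"
     and g: "g $ 0 = 1 \<and> (\<forall>j. 0 < j \<and> j \<le> n \<longrightarrow> g $ j = 0)"
  then show "(f * g) $ 0 = 1" by simp
  fix j assume j: "0 < j \<and> j \<le> n"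
  have "f $ i * g $ (j - i) = 0" if "i \<in> {0..j}" for i
    using f g j that by (cases "i = 0") auto
  then show "(f * g) $ j = 0" by (simp add: fps_mult_nth)
qed

lemma onemod_fac: "n < v u \<Longrightarrow> onemod n (fac w v u)"
  by (auto simp: onemod_def fac_def)

lemma onemod_prod: "(\<And>u. u \<in> F \<Longrightarrow> n < v u) \<Longrightarrow> onemod n (\<Prod>u\<in>F. fac w v u)"
  by (induction F rule: infinite_finite_induct) (auto simp: onemod_one onemod_mult onemod_fac)

lemma onemod_mult_nth: "onemod n g \<Longrightarrow> (f * g) $ n = f $ n"
proof -
  assume g: "onemod n g"
  have "(f * g) $ n = (\<Sum>i=0..n. f $ i * g $ (n - i))" by (simp add: fps_mult_nth)
  also have "\<dots> = (\<Sum>i\<in>{n}. f $ i * g $ (n - i))"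
    by (rule sum.mono_neutral_right) (use g in \<open>auto simp: onemod_def\<close>)
  also have "\<dots> = f $ n" using g by (simp add: onemod_def)
  finally show ?thesis .
qed

lemma gfw_trunc:
  assumes "finite F" "{u\<in>U. v u \<le> n} \<subseteq> F" "F \<subseteq> U" "wfs U v"
  shows "gfw U v w $ n = (\<Prod>u\<in>F. fac w v u) $ n"
proof -
  let ?U = "{u\<in>U. v u \<le> n}"
  have "(\<Prod>u\<in>F. fac w v u) = (\<Prod>u\<in>?U. fac w v u) * (\<Prod>u\<in>F - ?U. fac w v u)"
    using prod.subset_diff[OF assms(2) assms(1), of "fac w v"] by (simp add: mult.commute)
  moreover have "onemod n (\<Prod>u\<in>F - ?U. fac w v u)"
    by (rule onemod_prod) (use assms in auto)
  ultimately show ?thesis by (simp add: gfw_def onemod_mult_nth)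
qed

lemma wfs_finite: "wfs U v \<Longrightarrow> finite {u\<in>U. v u \<le> n}"
  by (simp add: wfs_def)

lemma gfw_mult_trunc:
  assumes "wfs U v" "wfs U' v'" "finite F" "{u\<in>U. v u \<le> n} \<subseteq> F" "F \<subseteq> U"
     "finite F'" "{u\<in>U'. v' u \<le> n} \<subseteq> F'" "F' \<subseteq> U'"
  shows "(gfw U v w * gfw U' v' w') $ n = ((\<Prod>u\<in>F. fac w v u) * (\<Prod>u\<in>F'. fac w' v' u)) $ n"
proof -
  have "(gfw U v w * gfw U' v' w') $ n = (\<Sum>i=0..n. gfw U v w $ i * gfw U' v' w' $ (n - i))"
    by (simp add: fps_mult_nth)
  also have "\<dots> = (\<Sum>i=0..n. (\<Prod>u\<in>F. fac w v u) $ i * (\<Prod>u\<in>F'. fac w' v' u) $ (n - i))"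
  proof (rule sum.cong)
    fix i assume "i \<in> {0..n}"
    then have "gfw U v w $ i = (\<Prod>u\<in>F. fac w v u) $ i"
          "gfw U' v' w' $ (n - i) = (\<Prod>u\<in>F'. fac w' v' u) $ (n - i)"
      by (intro gfw_trunc; use assms in auto)+
    then show "gfw U v w $ i * gfw U' v' w' $ (n - i) = (\<Prod>u\<in>F. fac w v u) $ i * (\<Prod>u\<in>F'. fac w' v' u) $ (n - i)"
      by simp
  qed simp
  finally show ?thesis by (simp add: fps_mult_nth)
qed

lemma gfw_union:
  assumes "wfs U v" "wfs V v" "U \<inter> V = {}"
  shows "gfw (U \<union> V) v w = gfw U v w * gfw V v w"
proof (rule fps_ext)
  fix n
  let ?U = "{u\<in>U. v u \<le> n}" and ?V = "{u\<in>V. v u \<le> n}"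
  have fU: "finite ?U" and fV: "finite ?V" using assms by (auto simp: wfs_def)
  have w: "wfs (U \<union> V) v" using assms unfolding wfs_def
    by (auto simp: Collect_disj_eq conj_disj_distribR)
  have "(gfw U v w * gfw V v w) $ n = ((\<Prod>u\<in>?U. fac w v u) * (\<Prod>u\<in>?V. fac w v u)) $ n"
    by (rule gfw_mult_trunc) (use assms fU fV in auto)
  also have "(\<Prod>u\<in>?U. fac w v u) * (\<Prod>u\<in>?V. fac w v u) = (\<Prod>u\<in>?U \<union> ?V. fac w v u)"
    by (rule prod.union_disjoint[symmetric]) (use fU fV assms in auto)
  also have "?U \<union> ?V = {u\<in>U \<union> V. v u \<le> n}" by auto
  finally show "gfw (U \<union> V) v w $ n = (gfw U v w * gfw V v w) $ n"
    by (simp add: gfw_def)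
qed

lemma gfw_reindex:
  assumes "bij_betw h U U'" "\<And>u. u \<in> U \<Longrightarrow> v' (h u) = v u" "\<And>u. u \<in> U \<Longrightarrow> w' (h u) = w u"
  shows "gfw U' v' w' = gfw U v w"
proof (rule fps_ext)
  fix n
  have eq: "{u\<in>U'. v' u \<le> n} = h ` {u\<in>U. v u \<le> n}"
    using assms bij_betw_imp_surj_on by fastforce
  have inj: "inj_on h {u\<in>U. v u \<le> n}"
    using assms(1) by (auto simp: bij_betw_def inj_on_def)
  have "(\<Prod>u\<in>{u\<in>U'. v' u \<le> n}. fac w' v' u) = (\<Prod>u\<in>{u\<in>U. v u \<le> n}. fac w' v' (h u))"
    unfolding eq by (rule prod.reindex[OF inj, unfolded comp_def])
  also have "\<dots> = (\<Prod>u\<in>{u\<in>U. v u \<le> n}. fac w v u)"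
    by (rule prod.cong) (use assms in \<open>auto simp: fac_def\<close>)
  finally show "gfw U' v' w' $ n = gfw U v w $ n" by (simp add: gfw_def)
qed

lemma wfs_mult: "wfs U v \<Longrightarrow> c > 0 \<Longrightarrow> wfs U (\<lambda>u. c * v u)"
  unfolding wfs_def
proof (intro conjI ballI allI)
  fix n assume a: "(\<forall>u\<in>U. 0 < v u) \<and> (\<forall>n. finite {u \<in> U. v u \<le> n})" "0 < c"
  have "{u \<in> U. c * v u \<le> n} \<subseteq> {u \<in> U. v u \<le> n}"
  proof
    fix u assume "u \<in> {u \<in> U. c * v u \<le> n}"
    moreover have "v u \<le> c * v u" using a(2) by simp
    ultimately show "u \<in> {u \<in> U. v u \<le> n}" using le_trans by blast
  qed
  then show "finite {u \<in> U. c * v u \<le> n}" using a(1) finite_subset by blast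
qed simp_all

lemma gfw_dil:
  assumes "wfs U v" "c > 0"
  shows "gfw U (\<lambda>u. c * v u) w = dil c (gfw U v w)"
proof (rule fps_ext)
  fix n
  let ?F = "{u\<in>U. v u \<le> n div c}"
  have fF: "finite ?F" using assms by (simp add: wfs_def)
  have "gfw U (\<lambda>u. c * v u) w $ n = (\<Prod>u\<in>?F. fac w (\<lambda>u. c * v u) u) $ n"
  proof (rule gfw_trunc[OF fF])
    show "{u \<in> U. c * v u \<le> n} \<subseteq> ?F" using assms
      by auto (metis div_le_mono nonzero_mult_div_cancel_left not_less0)
  qed (use assms wfs_mult in auto)
  also have "(\<Prod>u\<in>?F. fac w (\<lambda>u. c * v u) u) = dil c (\<Prod>u\<in>?F. fac w v u)"
    using assms by (simp add: dil_prod fac_def dil_add dil_one dil_mult dil_const dil_X_power)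
  also have "dil c (\<Prod>u\<in>?F. fac w v u) $ n = dil c (gfw U v w) $ n"
    using gfw_trunc[OF fF _ _ assms(1), of "n div c" w] by (simp add: dil_nth)
  finally show "gfw U (\<lambda>u. c * v u) w $ n = dil c (gfw U v w) $ n" .
qed

lemma gfw_termwise:
  assumes "wfs U v" "wfs U v'" "\<And>u. u \<in> U \<Longrightarrow> v u \<le> v' u"
    "\<And>u. u \<in> U \<Longrightarrow> fac w1 v u * fac w2 v u = fac w3 v' u"
  shows "gfw U v w1 * gfw U v w2 = gfw U v' w3"
proof (rule fps_ext)
  fix n
  let ?F = "{u\<in>U. v u \<le> n}"
  have fF: "finite ?F" using assms by (simp add: wfs_def)
  have "(gfw U v w1 * gfw U v w2) $ n = ((\<Prod>u\<in>?F. fac w1 v u) * (\<Prod>u\<in>?F. fac w2 v u)) $ n"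
    by (rule gfw_mult_trunc) (use assms fF in auto)
  also have "(\<Prod>u\<in>?F. fac w1 v u) * (\<Prod>u\<in>?F. fac w2 v u) = (\<Prod>u\<in>?F. fac w3 v' u)"
    by (simp add: prod.distrib[symmetric] assms(4))
  also have "(\<Prod>u\<in>?F. fac w3 v' u) $ n = gfw U v' w3 $ n"
  proof (rule gfw_trunc[symmetric, OF fF])
    show "{u \<in> U. v' u \<le> n} \<subseteq> ?F" using assms(3) le_trans by blast
  qed (use assms in auto)
  finally show "(gfw U v w1 * gfw U v w2) $ n = gfw U v' w3 $ n" .
qed

lemma gfw_nth0: "gfw U v w $ 0 = 1" if "wfs U v"
proof -
  have e: "{u\<in>U. v u = 0} = {}" using that by (auto simp: wfs_def)
  show ?thesis unfolding gfw_def by (simp add: e)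
qed

lemma prod_fac_expand:
  assumes "finite F"
  shows "(\<Prod>u\<in>F. fac w v u) $ n = (\<Sum>P\<in>{P \<in> Pow F. sum v P = n}. prod w P)"
proof -
  have "(\<Prod>u\<in>F. fac w v u) = (\<Prod>u\<in>F. fps_const (w u) * fps_X ^ v u + 1)"
    by (simp add: fac_def add.commute)
  also have "\<dots> = (\<Sum>P\<in>Pow F. (\<Prod>u\<in>P. fps_const (w u) * fps_X ^ v u) * (\<Prod>u\<in>F - P. 1))"
    by (rule prod_add[OF assms])
  also have "\<dots> = (\<Sum>P\<in>Pow F. fps_const (prod w P) * fps_X ^ sum v P)"
  proof (rule sum.cong)
    fix P assume "P \<in> Pow F"
    then have "finite P" using assms finite_subset by auto
    have "(\<Prod>u\<in>P. fps_const (w u)) = fps_const (prod w P)"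
      using \<open>finite P\<close> by (induction P rule: finite_induct) auto
    then show "(\<Prod>u\<in>P. fps_const (w u) * fps_X ^ v u) * (\<Prod>u\<in>F - P. 1) = fps_const (prod w P) * fps_X ^ sum v P"
      by (simp add: prod.distrib power_sum)
  qed simp
  finally have "(\<Prod>u\<in>F. fac w v u) $ n = (\<Sum>P\<in>Pow F. (fps_const (prod w P) * fps_X ^ sum v P) $ n)"
    by (simp add: fps_sum_nth)
  also have "\<dots> = (\<Sum>P\<in>Pow F. if sum v P = n then prod w P else 0)"
    by (rule sum.cong) simp_all
  also have "\<dots> = (\<Sum>P\<in>{P \<in> Pow F. sum v P = n}. prod w P)"
    by (rule sum.inter_filter[symmetric]) (simp add: assms)
  finally show ?thesis .
qed

lemma gfw_nth:
  assumes "wfs U v"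
  shows "gfw U v w $ n = (\<Sum>P\<in>{P. P \<subseteq> U \<and> finite P \<and> sum v P = n}. prod w P)"
proof -
  let ?F = "{u\<in>U. v u \<le> n}"
  have fF: "finite ?F" using assms by (simp add: wfs_def)
  have "gfw U v w $ n = (\<Sum>P\<in>{P \<in> Pow ?F. sum v P = n}. prod w P)"
    using gfw_trunc[OF fF _ _ assms, of n w] prod_fac_expand[OF fF, of w v n] by simp
  also have "{P \<in> Pow ?F. sum v P = n} = {P. P \<subseteq> U \<and> finite P \<and> sum v P = n}"
  proof (intro set_eqI iffI)
    fix P assume "P \<in> {P \<in> Pow ?F. sum v P = n}"
    then show "P \<in> {P. P \<subseteq> U \<and> finite P \<and> sum v P = n}" using fF finite_subset by auto
  next
    fix P assume P: "P \<in> {P. P \<subseteq> U \<and> finite P \<and> sum v P = n}"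
    have "v u \<le> n" if "u \<in> P" for u
      using P that member_le_sum[of u P v] by auto
    then show "P \<in> {P \<in> Pow ?F. sum v P = n}" using P by auto
  qed
  finally show ?thesis .
qed


definition O1 :: "(nat \<times> nat) set" where "O1 = {(n, c). odd n \<and> c < 2}"
definition QQ :: "(nat \<times> nat) set set" where "QQ = {P. P \<subseteq> O1 \<and> finite P}"
definition dd :: "(nat \<times> nat) set \<Rightarrow> int" where
  "dd P = (\<Sum>x\<in>P. if snd x = 0 then 1 else -1)"
definition ss :: "(nat \<times> nat) set \<Rightarrow> int" where
  "ss P = (\<Sum>x\<in>P. int (fst x))"
definition Nk :: "int \<Rightarrow> int \<Rightarrow> nat" where
  "Nk k N = card {P\<in>QQ. dd P = k \<and> ss P = N}"

definition hh :: "nat \<times> nat \<Rightarrow> nat \<times> nat" where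
  "hh x = (if snd x = 0 then (fst x + 2, 0) else (fst x - 2, 1))"
definition hi :: "nat \<times> nat \<Rightarrow> nat \<times> nat" where
  "hi x = (if snd x = 0 then (fst x - 2, 0) else (fst x + 2, 1))"
definition sig :: "(nat \<times> nat) set \<Rightarrow> (nat \<times> nat) set" where
  "sig P = (if (1,1) \<in> P then hh ` (P - {(1,1)}) else insert (1,0) (hh ` P))"
definition tau :: "(nat \<times> nat) set \<Rightarrow> (nat \<times> nat) set" where
  "tau P = (if (1,0) \<in> P then hi ` (P - {(1,0)}) else insert (1,1) (hi ` P))"

lemma O1_iff: "x \<in> O1 \<longleftrightarrow> odd (fst x) \<and> (snd x = 0 \<or> snd x = 1)"
  by (cases x) (auto simp: O1_def)

lemma hh_O1: "x \<in> O1 \<Longrightarrow> x \<noteq> (1,1) \<Longrightarrow> hh x \<in> O1 \<and> hh x \<noteq> (1,0) \<and> hi (hh x) = x"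
proof -
  assume x: "x \<in> O1" "x \<noteq> (1,1)"
  obtain n c where xe: "x = (n, c)" by (cases x)
  have on: "odd n" and c: "c = 0 \<or> c = 1" using x xe by (auto simp: O1_iff)
  show ?thesis
  proof (cases "c = 0")
    case True
    then show ?thesis using on xe by (simp add: O1_iff hh_def hi_def)
  next
    case False
    then have c1: "c = 1" using c by simp
    then have "n \<noteq> 1" using x xe by simp
    then have n3: "n \<ge> 3" using on by presburger
    have "odd (n - 2)" using on n3 by presburger
    then show ?thesis using n3 xe c1 by (simp add: O1_iff hh_def hi_def)
  qed
qed

lemma hi_O1: "x \<in> O1 \<Longrightarrow> x \<noteq> (1,0) \<Longrightarrow> hi x \<in> O1 \<and> hi x \<noteq> (1,1) \<and> hh (hi x) = x"
proof -
  assume x: "x \<in> O1" "x \<noteq> (1,0)"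
  obtain n c where xe: "x = (n, c)" by (cases x)
  have on: "odd n" and c: "c = 0 \<or> c = 1" using x xe by (auto simp: O1_iff)
  show ?thesis
  proof (cases "c = 0")
    case True
    then have "n \<noteq> 1" using x xe by simp
    then have n3: "n \<ge> 3" using on by presburger
    have "odd (n - 2)" using on n3 by presburger
    then show ?thesis using n3 xe True by (simp add: O1_iff hh_def hi_def)
  next
    case False
    then have c1: "c = 1" using c by simp
    then show ?thesis using on xe by (simp add: O1_iff hh_def hi_def)
  qed
qed

lemma inj_hh: "inj_on hh (O1 - {(1,1)})"
proof (rule inj_onI)
  fix x y assume "x \<in> O1 - {(1,1)}" "y \<in> O1 - {(1,1)}" "hh x = hh y"
  then have "hi (hh x) = x" "hi (hh y) = y" using hh_O1[of x] hh_O1[of y] by blast+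
  then show "x = y" using \<open>hh x = hh y\<close> by metis
qed

lemma inj_hi: "inj_on hi (O1 - {(1,0)})"
proof (rule inj_onI)
  fix x y assume "x \<in> O1 - {(1,0)}" "y \<in> O1 - {(1,0)}" "hi x = hi y"
  then have "hh (hi x) = x" "hh (hi y) = y" using hi_O1[of x] hi_O1[of y] by blast+
  then show "x = y" using \<open>hi x = hi y\<close> by metis
qed

lemma QQ_iff: "P \<in> QQ \<longleftrightarrow> P \<subseteq> O1 \<and> finite P"
  by (simp add: QQ_def)

lemma hh_img_O1: "A \<subseteq> O1 - {(1,1)} \<Longrightarrow> hh ` A \<subseteq> O1 - {(1,0)}"
proof
  fix y assume A: "A \<subseteq> O1 - {(1,1)}" and "y \<in> hh ` A"
  then obtain x where x: "x \<in> A" "y = hh x" by blast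
  then have "x \<in> O1" "x \<noteq> (1,1)" using A by auto
  then show "y \<in> O1 - {(1,0)}" using hh_O1[of x] x by auto
qed

lemma hi_img_O1: "A \<subseteq> O1 - {(1,0)} \<Longrightarrow> hi ` A \<subseteq> O1 - {(1,1)}"
proof
  fix y assume A: "A \<subseteq> O1 - {(1,0)}" and "y \<in> hi ` A"
  then obtain x where x: "x \<in> A" "y = hi x" by blast
  then have "x \<in> O1" "x \<noteq> (1,0)" using A by auto
  then show "y \<in> O1 - {(1,1)}" using hi_O1[of x] x by auto
qed

lemma hi_hh_img: "A \<subseteq> O1 - {(1,1)} \<Longrightarrow> hi ` hh ` A = A"
proof -
  assume A: "A \<subseteq> O1 - {(1,1)}"
  have "hi ` hh ` A = (\<lambda>x. hi (hh x)) ` A" by (simp add: image_image)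
  also have "\<dots> = (\<lambda>x. x) ` A"
  proof (rule image_cong[OF refl])
    fix x assume "x \<in> A" then show "hi (hh x) = x" using A hh_O1[of x] by blast
  qed
  finally show ?thesis by simp
qed

lemma hh_hi_img: "A \<subseteq> O1 - {(1,0)} \<Longrightarrow> hh ` hi ` A = A"
proof -
  assume A: "A \<subseteq> O1 - {(1,0)}"
  have "hh ` hi ` A = (\<lambda>x. hh (hi x)) ` A" by (simp add: image_image)
  also have "\<dots> = (\<lambda>x. x) ` A"
  proof (rule image_cong[OF refl])
    fix x assume "x \<in> A" then show "hh (hi x) = x" using A hi_O1[of x] by blast
  qed
  finally show ?thesis by simp
qed

lemma sig_QQ: "P \<in> QQ \<Longrightarrow> sig P \<in> QQ"
proof -
  assume P: "P \<in> QQ"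
  then have PO: "P \<subseteq> O1" and fP: "finite P" by (auto simp: QQ_iff)
  show ?thesis
  proof (cases "(1,1) \<in> P")
    case True
    have "hh ` (P - {(1,1)}) \<subseteq> O1" using hh_img_O1[of "P - {(1,1)}"] PO by blast
    then show ?thesis using True fP by (simp add: sig_def QQ_iff)
  next
    case False
    have "hh ` P \<subseteq> O1" using hh_img_O1[of P] PO False by blast
    moreover have "(1,0) \<in> O1" by (simp add: O1_iff)
    ultimately show ?thesis using False fP by (simp add: sig_def QQ_iff)
  qed
qed

lemma tau_QQ: "P \<in> QQ \<Longrightarrow> tau P \<in> QQ"
proof -
  assume P: "P \<in> QQ"
  then have PO: "P \<subseteq> O1" and fP: "finite P" by (auto simp: QQ_iff)
  show ?thesis
  proof (cases "(1,0) \<in> P")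
    case True
    have "hi ` (P - {(1,0)}) \<subseteq> O1" using hi_img_O1[of "P - {(1,0)}"] PO by blast
    then show ?thesis using True fP by (simp add: tau_def QQ_iff)
  next
    case False
    have "hi ` P \<subseteq> O1" using hi_img_O1[of P] PO False by blast
    moreover have "(1,1) \<in> O1" by (simp add: O1_iff)
    ultimately show ?thesis using False fP by (simp add: tau_def QQ_iff)
  qed
qed

lemma tau_sig: "P \<in> QQ \<Longrightarrow> tau (sig P) = P"
proof -
  assume P: "P \<in> QQ"
  then have PO: "P \<subseteq> O1" by (auto simp: QQ_iff)
  show ?thesis
  proof (cases "(1,1) \<in> P")
    case True
    let ?A = "P - {(1,1)}"
    have A: "?A \<subseteq> O1 - {(1,1)}" using PO by blast
    have "(1,0) \<notin> hh ` ?A" using hh_img_O1[OF A] by blast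
    then have "tau (sig P) = insert (1,1) (hi ` hh ` ?A)" using True by (simp add: sig_def tau_def)
    also have "\<dots> = P" using hi_hh_img[OF A] True by blast
    finally show ?thesis .
  next
    case False
    have A: "P \<subseteq> O1 - {(1,1)}" using PO False by blast
    have n: "(1,0) \<notin> hh ` P" using hh_img_O1[OF A] by blast
    then have "insert (1,0) (hh ` P) - {(1,0)} = hh ` P" by blast
    then have "tau (sig P) = hi ` hh ` P" using False by (simp add: sig_def tau_def)
    also have "\<dots> = P" using hi_hh_img[OF A] .
    finally show ?thesis .
  qed
qed

lemma sig_tau: "P \<in> QQ \<Longrightarrow> sig (tau P) = P"
proof -
  assume P: "P \<in> QQ"
  then have PO: "P \<subseteq> O1" by (auto simp: QQ_iff)
  show ?thesis
  proof (cases "(1,0) \<in> P")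
    case True
    let ?A = "P - {(1,0)}"
    have A: "?A \<subseteq> O1 - {(1,0)}" using PO by blast
    have "(1,1) \<notin> hi ` ?A" using hi_img_O1[OF A] by blast
    then have "sig (tau P) = insert (1,0) (hh ` hi ` ?A)" using True by (simp add: sig_def tau_def)
    also have "\<dots> = P" using hh_hi_img[OF A] True by blast
    finally show ?thesis .
  next
    case False
    have A: "P \<subseteq> O1 - {(1,0)}" using PO False by blast
    have n: "(1,1) \<notin> hi ` P" using hi_img_O1[OF A] by blast
    then have "insert (1,1) (hi ` P) - {(1,1)} = hi ` P" by blast
    then have "sig (tau P) = hh ` hi ` P" using False by (simp add: sig_def tau_def)
    also have "\<dots> = P" using hh_hi_img[OF A] .
    finally show ?thesis .
  qed
qed

definition sgn01 :: "nat \<times> nat \<Rightarrow> int" where "sgn01 x = (if snd x = 0 then 1 else -1)"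

lemma dd_sum: "dd P = sum sgn01 P"
  by (simp add: dd_def sgn01_def)

lemma hh_snd: "x \<in> O1 \<Longrightarrow> x \<noteq> (1,1) \<Longrightarrow> sgn01 (hh x) = sgn01 x \<and> int (fst (hh x)) = int (fst x) + 2 * sgn01 x"
proof -
  assume x: "x \<in> O1" "x \<noteq> (1,1)"
  obtain n c where xe: "x = (n, c)" by (cases x)
  have on: "odd n" and c: "c = 0 \<or> c = 1" using x xe by (auto simp: O1_iff)
  show ?thesis
  proof (cases "c = 0")
    case True
    then show ?thesis using xe by (simp add: hh_def sgn01_def)
  next
    case False
    then have c1: "c = 1" using c by simp
    then have "n \<noteq> 1" using x xe by simp
    then have n3: "n \<ge> 3" using on by presburger
    then show ?thesis using xe c1 by (simp add: hh_def sgn01_def of_nat_diff)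
  qed
qed

lemma dd_hh: "A \<subseteq> O1 - {(1,1)} \<Longrightarrow> dd (hh ` A) = dd A"
proof -
  assume A: "A \<subseteq> O1 - {(1,1)}"
  have inj: "inj_on hh A" using inj_hh A inj_on_subset by blast
  have "dd (hh ` A) = (\<Sum>x\<in>A. sgn01 (hh x))" unfolding dd_sum by (rule sum.reindex[OF inj, unfolded comp_def])
  also have "\<dots> = (\<Sum>x\<in>A. sgn01 x)" by (rule sum.cong) (use A hh_snd in auto)
  finally show ?thesis by (simp add: dd_sum)
qed

lemma ss_hh: "A \<subseteq> O1 - {(1,1)} \<Longrightarrow> ss (hh ` A) = ss A + 2 * dd A"
proof -
  assume A: "A \<subseteq> O1 - {(1,1)}"
  have inj: "inj_on hh A" using inj_hh A inj_on_subset by blast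
  have "ss (hh ` A) = (\<Sum>x\<in>A. int (fst (hh x)))" unfolding ss_def by (rule sum.reindex[OF inj, unfolded comp_def])
  also have "\<dots> = (\<Sum>x\<in>A. int (fst x) + 2 * sgn01 x)" by (rule sum.cong) (use A hh_snd in auto)
  finally show ?thesis by (simp add: dd_sum ss_def sum.distrib sum_distrib_left)
qed

lemma dd_ss_insert: "finite A \<Longrightarrow> x \<notin> A \<Longrightarrow> dd (insert x A) = dd A + sgn01 x \<and> ss (insert x A) = ss A + int (fst x)"
  by (simp add: dd_sum ss_def)

lemma sig_dd_ss: "P \<in> QQ \<Longrightarrow> dd (sig P) = dd P + 1 \<and> ss (sig P) = ss P + 2 * dd P + 1"
proof -
  assume P: "P \<in> QQ"
  then have PO: "P \<subseteq> O1" and fP: "finite P" by (auto simp: QQ_iff)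
  show ?thesis
  proof (cases "(1,1) \<in> P")
    case True
    let ?A = "P - {(1,1)}"
    have A: "?A \<subseteq> O1 - {(1,1)}" using PO by blast
    have ins: "P = insert (1,1) ?A" using True by blast
    have "dd P = dd ?A - 1" "ss P = ss ?A + 1"
      using dd_ss_insert[of ?A "(1,1)"] fP ins by (auto simp: sgn01_def)
    then show ?thesis using True dd_hh[OF A] ss_hh[OF A] by (simp add: sig_def)
  next
    case False
    have A: "P \<subseteq> O1 - {(1,1)}" using PO False by blast
    have n: "(1,0) \<notin> hh ` P" using hh_img_O1[OF A] by blast
    have "dd (sig P) = dd (hh ` P) + 1" "ss (sig P) = ss (hh ` P) + 1"
      using dd_ss_insert[of "hh ` P" "(1,0)"] fP n False by (auto simp: sig_def sgn01_def)
    then show ?thesis using dd_hh[OF A] ss_hh[OF A] by simp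
  qed
qed



lemma fst_pos: "x \<in> O1 \<Longrightarrow> fst x \<ge> 1"
  by (auto simp: O1_iff elim: oddE)

lemma ss_ge: "P \<in> QQ \<Longrightarrow> x \<in> P \<Longrightarrow> int (fst x) \<le> ss P"
  unfolding ss_def QQ_iff by (rule member_le_sum) auto

lemma ss_nonneg: "ss P \<ge> 0"
  unfolding ss_def by (rule sum_nonneg) auto

lemma finite_QQ_ss: "finite {P\<in>QQ. ss P = N}"
proof -
  have B: "finite ({0..nat N} \<times> {0..1::nat})" by simp
  have "{P\<in>QQ. ss P = N} \<subseteq> Pow ({0..nat N} \<times> {0..1})"
  proof
    fix P assume P: "P \<in> {P\<in>QQ. ss P = N}"
    have "P \<subseteq> {0..nat N} \<times> {0..1}"
    proof
      fix x assume x: "x \<in> P"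
      have xO: "x \<in> O1" using P x by (auto simp: QQ_iff)
      have "int (fst x) \<le> N" using ss_ge[of P x] P x by auto
      moreover have "snd x \<le> 1" using O1_iff[of x] xO by auto
      ultimately show "x \<in> {0..nat N} \<times> {0..1}" by (cases x) auto
    qed
    then show "P \<in> Pow ({0..nat N} \<times> {0..1})" by simp
  qed
  then show ?thesis by (rule finite_subset) (use B in simp)
qed

lemma Nk_shift: "Nk (k + 1) (N + 2 * k + 1) = Nk k N"
proof -
  let ?A = "{P\<in>QQ. dd P = k \<and> ss P = N}" and ?B = "{P\<in>QQ. dd P = k + 1 \<and> ss P = N + 2 * k + 1}"
  have "bij_betw sig ?A ?B"
  proof (rule bij_betw_byWitness[where f' = tau])
    show "\<forall>a\<in>?A. tau (sig a) = a" using tau_sig by auto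
    show "\<forall>a\<in>?B. sig (tau a) = a" using sig_tau by auto
    show "sig ` ?A \<subseteq> ?B" using sig_QQ sig_dd_ss by auto
    show "tau ` ?B \<subseteq> ?A"
    proof
      fix Q assume "Q \<in> tau ` ?B"
      then obtain P where P: "P \<in> ?B" "Q = tau P" by blast
      have "Q \<in> QQ" using tau_QQ P by auto
      moreover have "sig Q = P" using sig_tau P by auto
      ultimately show "Q \<in> ?A" using sig_dd_ss[of Q] P by auto
    qed
  qed
  then have "card ?A = card ?B" by (rule bij_betw_same_card)
  then show ?thesis unfolding Nk_def by simp
qed

lemma Nk_pos: "Nk (int m) N = Nk 0 (N - int m ^ 2)"
proof (induction m arbitrary: N)
  case 0 then show ?case by simp
next
  case (Suc m)
  have "Nk (int (Suc m)) N = Nk (int m + 1) ((N - 2 * int m - 1) + 2 * int m + 1)" by (simp add: add.commute)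
  also have "\<dots> = Nk (int m) (N - 2 * int m - 1)" by (rule Nk_shift)
  also have "\<dots> = Nk 0 (N - int (Suc m) ^ 2)" using Suc by (simp add: power2_eq_square algebra_simps)
  finally show ?case .
qed

lemma Nk_negs: "Nk (- int m) N = Nk 0 (N - int m ^ 2)"
proof (induction m arbitrary: N)
  case 0 then show ?case by simp
next
  case (Suc m)
  have "Nk (- int (Suc m)) N = Nk (- int (Suc m) + 1) (N + 2 * (- int (Suc m)) + 1)"
    by (rule Nk_shift[symmetric])
  also have "\<dots> = Nk (- int m) (N - 2 * int m - 1)" by (simp add: algebra_simps)
  also have "\<dots> = Nk 0 (N - int (Suc m) ^ 2)" using Suc by (simp add: power2_eq_square algebra_simps)
  finally show ?case .
qed

lemma Nk_formula: "Nk k N = Nk 0 (N - k ^ 2)"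
proof (cases "k \<ge> 0")
  case True
  then obtain m where "k = int m" using nonneg_eq_int by blast
  then show ?thesis using Nk_pos by simp
next
  case False
  then have "- k \<ge> 0" by simp
  then obtain m where "- k = int m" using nonneg_eq_int by blast
  then have "k = - int m" by simp
  then show ?thesis using Nk_negs by simp
qed

lemma Nk_neg: "N < 0 \<Longrightarrow> Nk k N = 0"
proof -
  assume N: "N < 0"
  have "\<not> ss P = N" for P using ss_nonneg[of P] N by linarith
  then have e: "{P\<in>QQ. dd P = k \<and> ss P = N} = {}" by auto
  show ?thesis unfolding Nk_def e by simp
qed

lemma Nk00: "Nk 0 0 = 1"
proof -
  have "{P\<in>QQ. dd P = 0 \<and> ss P = 0} = {{}}"
  proof (intro set_eqI iffI)
    fix P assume P: "P \<in> {P\<in>QQ. dd P = 0 \<and> ss P = 0}"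
    have "P = {}"
    proof (rule ccontr)
      assume "P \<noteq> {}"
      then obtain x where x: "x \<in> P" by blast
      then have "int (fst x) \<le> 0" using ss_ge[of P x] P by auto
      moreover have "x \<in> O1" using x P by (auto simp: QQ_iff)
      then have "fst x \<ge> 1" using fst_pos[of x] by simp
      ultimately show False by simp
    qed
    then show "P \<in> {{}}" by simp
  qed (auto simp: QQ_iff dd_def ss_def)
  then show ?thesis by (simp add: Nk_def)
qed



definition QM :: "nat \<Rightarrow> nat \<Rightarrow> int \<Rightarrow> (nat \<times> nat) set set" where
  "QM a b M = {P\<in>QQ. int a * ss P + int b * dd P = M}"

lemma core_count:
  assumes a: "a \<ge> 1"
  shows "card {P\<in>QQ. dd P = k \<and> int a * ss P + int b * k = M} =
     (if int a dvd (M - int b * k - int a * k^2) then Nk 0 ((M - int b * k - int a * k^2) div int a) else 0)"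
proof (cases "int a dvd (M - int b * k)")
  case True
  then obtain t where t: "M - int b * k = int a * t" by (auto elim: dvdE)
  have "{P\<in>QQ. dd P = k \<and> int a * ss P + int b * k = M} = {P\<in>QQ. dd P = k \<and> ss P = t}"
    using t a by (auto simp: algebra_simps)
  then have "card {P\<in>QQ. dd P = k \<and> int a * ss P + int b * k = M} = Nk k t" by (simp add: Nk_def)
  also have "\<dots> = Nk 0 (t - k^2)" by (rule Nk_formula)
  also have "M - int b * k - int a * k^2 = int a * (t - k^2)" using t by (simp add: algebra_simps)
  ultimately show ?thesis using a by simp
next
  case False
  have e: "{P\<in>QQ. dd P = k \<and> int a * ss P + int b * k = M} = {}"
  proof -
    have "\<not> (int a * ss P + int b * k = M)" for P
    proof
      assume "int a * ss P + int b * k = M"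
      then have "M - int b * k = int a * ss P" by simp
      then show False using False by simp
    qed
    then show ?thesis by auto
  qed
  have nd: "\<not> int a dvd (M - int b * k - int a * k^2)"
  proof
    assume "int a dvd (M - int b * k - int a * k^2)"
    then have "int a dvd (M - int b * k - int a * k^2) + int a * k^2" by (rule dvd_add) simp
    moreover have "(M - int b * k - int a * k^2) + int a * k^2 = M - int b * k" by simp
    ultimately show False using False by simp
  qed
  show ?thesis unfolding e using nd by simp
qed

lemma quad_bound:
  assumes a: "(a::nat) \<ge> 1" and b: "b \<le> 1"
  shows "\<bar>k\<bar> - 1 \<le> int a * k^2 + int b * (k::int)" and "0 \<le> int a * k^2 + int b * k"
proof -
  have h1: "k^2 \<le> int a * k^2"
    using a by (metis comm_monoid_mult_class.mult_1 mult_right_mono one_of_nat_le_iff zero_le_power2)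
  have h2: "- \<bar>k\<bar> \<le> int b * k"
  proof (cases "b = 0")
    case False
    then have "b = 1" using b by simp
    then show ?thesis by simp
  qed simp
  have sq: "k^2 = \<bar>k\<bar> * \<bar>k\<bar>" by (simp add: power2_eq_square)
  have h3: "0 \<le> (\<bar>k\<bar> - 1) * (\<bar>k\<bar> - 1)" by simp
  have h4: "\<bar>k\<bar> \<le> \<bar>k\<bar> * \<bar>k\<bar> \<or> k = 0"
  proof (cases "k = 0")
    case False
    then have "1 \<le> \<bar>k\<bar>" by simp
    then have "\<bar>k\<bar> * 1 \<le> \<bar>k\<bar> * \<bar>k\<bar>" by (rule mult_left_mono) simp
    then show ?thesis by simp
  qed simp
  show "\<bar>k\<bar> - 1 \<le> int a * k^2 + int b * k" using h1 h2 h3 sq by (simp add: algebra_simps)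
  show "0 \<le> int a * k^2 + int b * k"
  proof (cases "k = 0")
    case False
    then have "\<bar>k\<bar> \<le> \<bar>k\<bar> * \<bar>k\<bar>" using h4 by simp
    then show ?thesis using h1 h2 sq by linarith
  qed simp
qed

lemma quad_finite:
  assumes "(a::nat) \<ge> 1" "b \<le> 1"
  shows "finite {k::int. int a * k^2 + int b * k \<le> M}"
proof (rule finite_subset)
  show "{k::int. int a * k^2 + int b * k \<le> M} \<subseteq> {-(\<bar>M\<bar>+1)..\<bar>M\<bar>+1}"
  proof
    fix k assume "k \<in> {k::int. int a * k^2 + int b * k \<le> M}"
    then have "\<bar>k\<bar> - 1 \<le> M" using quad_bound(1)[OF assms, of k] by simp
    then show "k \<in> {-(\<bar>M\<bar>+1)..\<bar>M\<bar>+1}" by auto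
  qed
qed simp

definition tt :: "nat \<Rightarrow> nat \<Rightarrow> nat \<times> nat \<Rightarrow> int" where
  "tt a b y = int a * int (fst y) + int b * sgn01 y"

lemma tt_sum: "int a * ss P + int b * dd P = sum (tt a b) P"
  by (simp add: tt_def ss_def dd_sum sum.distrib sum_distrib_left)

lemma tt_bound: "a \<ge> 1 \<Longrightarrow> b \<le> 1 \<Longrightarrow> y \<in> O1 \<Longrightarrow> 0 \<le> tt a b y \<and> int (fst y) - 1 \<le> tt a b y"
proof -
  assume a: "a \<ge> 1" and b: "b \<le> 1" and y: "y \<in> O1"
  have f: "fst y \<ge> 1" using fst_pos y by simp
  have "int (fst y) \<le> int a * int (fst y)" using a f by simp
  moreover have "- 1 \<le> int b * sgn01 y" using b by (cases "b = 0") (auto simp: sgn01_def)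
  ultimately show ?thesis using f unfolding tt_def by linarith
qed

lemma QM_finite:
  assumes a: "a \<ge> 1" and b: "b \<le> 1"
  shows "finite (QM a b M)"
proof -
  have B: "finite ({0..nat (M+1)} \<times> {0..1::nat})" by simp
  have "QM a b M \<subseteq> Pow ({0..nat (M+1)} \<times> {0..1})"
  proof
    fix P assume P: "P \<in> QM a b M"
    then have PQ: "P \<in> QQ" and Ps: "sum (tt a b) P = M" by (auto simp: QM_def tt_sum)
    have "P \<subseteq> {0..nat (M+1)} \<times> {0..1}"
    proof
      fix x assume x: "x \<in> P"
      have xO: "x \<in> O1" using PQ x by (auto simp: QQ_iff)
      have "tt a b x \<le> sum (tt a b) P"
        by (rule member_le_sum) (use PQ x tt_bound[OF a b] in \<open>auto simp: QQ_iff\<close>)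
      then have "int (fst x) \<le> M + 1" using tt_bound[OF a b xO] Ps by linarith
      moreover have "snd x \<le> 1" using O1_iff[of x] xO by auto
      ultimately show "x \<in> {0..nat (M+1)} \<times> {0..1}" by (cases x) auto
    qed
    then show "P \<in> Pow ({0..nat (M+1)} \<times> {0..1})" by simp
  qed
  then show ?thesis by (rule finite_subset) (use B in simp)
qed

definition Th :: "nat \<Rightarrow> nat \<Rightarrow> (int \<Rightarrow> complex) \<Rightarrow> complex fps" where
  "Th a b f = Abs_fps (\<lambda>M. \<Sum>k\<in>{k::int. int a * k^2 + int b * k = int M}. f k)"

definition GG :: "complex fps" where
  "GG = Abs_fps (\<lambda>N. of_nat (Nk 0 (int N)))"

lemma core_sum:
  assumes a: "a \<ge> 1" and b: "b \<le> 1"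
  shows "(\<Sum>P\<in>QM a b (int M). f (dd P)) = (Th a b f * dil a GG) $ M"
proof -
  define c where "c k = card {P\<in>QM a b (int M). dd P = k}" for k
  have cc: "c k = (if int a dvd (int M - int b * k - int a * k^2) then Nk 0 ((int M - int b * k - int a * k^2) div int a) else 0)" for k
  proof -
    have "{P\<in>QM a b (int M). dd P = k} = {P\<in>QQ. dd P = k \<and> int a * ss P + int b * k = int M}"
      by (auto simp: QM_def)
    then show ?thesis unfolding c_def using core_count[OF a, of k b "int M"] by simp
  qed
  let ?K1 = "dd ` QM a b (int M)"
  let ?A = "\<lambda>i::nat. {k::int. int a * k^2 + int b * k = int i}"
  let ?K2 = "\<Union>i\<in>{0..M}. ?A i"
  have fQ: "finite (QM a b (int M))" by (rule QM_finite[OF a b])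
  have fA: "finite (?A i)" for i
    by (rule finite_subset[OF _ quad_finite[OF a b, of "int i"]]) auto
  have "(\<Sum>P\<in>QM a b (int M). f (dd P)) = (\<Sum>k\<in>?K1. \<Sum>P\<in>{P\<in>QM a b (int M). dd P = k}. f (dd P))"
    by (rule sum.image_gen[OF fQ])
  also have "\<dots> = (\<Sum>k\<in>?K1. f k * of_nat (c k))"
    by (rule sum.cong) (auto simp: c_def)
  finally have L: "(\<Sum>P\<in>QM a b (int M). f (dd P)) = (\<Sum>k\<in>?K1. f k * of_nat (c k))" .
  have "(Th a b f * dil a GG) $ M = (\<Sum>i=0..M. (\<Sum>k\<in>?A i. f k) * dil a GG $ (M - i))"
    by (simp add: fps_mult_nth Th_def)
  also have "\<dots> = (\<Sum>i=0..M. \<Sum>k\<in>?A i. f k * of_nat (c k))"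
  proof (rule sum.cong[OF refl])
    fix i assume i: "i \<in> {0..M}"
    have "(\<Sum>k\<in>?A i. f k) * dil a GG $ (M - i) = (\<Sum>k\<in>?A i. f k * dil a GG $ (M - i))"
      by (simp add: sum_distrib_right)
    also have "\<dots> = (\<Sum>k\<in>?A i. f k * of_nat (c k))"
    proof (rule sum.cong[OF refl])
      fix k assume k: "k \<in> ?A i"
      have e: "int M - int b * k - int a * k^2 = int (M - i)" using k i by auto
      have "dil a GG $ (M - i) = of_nat (if a dvd (M - i) then Nk 0 (int ((M - i) div a)) else 0)"
        by (simp add: dil_nth GG_def)
      also have "\<dots> = of_nat (c k)"
        unfolding cc e by (simp add: zdiv_int)
      finally show "f k * dil a GG $ (M - i) = f k * of_nat (c k)" by simp
    qed
    finally show "(\<Sum>k\<in>?A i. f k) * dil a GG $ (M - i) = (\<Sum>k\<in>?A i. f k * of_nat (c k))" .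
  qed
  also have "\<dots> = (\<Sum>k\<in>?K2. f k * of_nat (c k))"
    by (rule sum.UNION_disjoint[symmetric]) (use fA in auto)
  finally have R: "(Th a b f * dil a GG) $ M = (\<Sum>k\<in>?K2. f k * of_nat (c k))" .
  have fK2: "finite ?K2" using fA by auto
  have fK1: "finite ?K1" using fQ by auto
  have z1: "c k = 0" if "k \<in> ?K1 - ?K2" for k
  proof -
    have nk: "\<not> (int a * k^2 + int b * k \<le> int M)"
    proof
      assume h: "int a * k^2 + int b * k \<le> int M"
      have "0 \<le> int a * k^2 + int b * k" by (rule quad_bound(2)[OF a b])
      then obtain i where i: "int i = int a * k^2 + int b * k" by (metis nonneg_eq_int)
      then have "i \<in> {0..M}" using h by simp
      then have "k \<in> ?K2" using i by (intro UN_I[of i]) auto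
      then show False using that by simp
    qed
    then have "int M - int b * k - int a * k^2 < 0" by simp
    then have "(int M - int b * k - int a * k^2) div int a < 0" using a by (simp add: div_neg_pos_less0)
    then show ?thesis unfolding cc using Nk_neg by simp
  qed
  have z2: "c k = 0" if "k \<in> ?K2 - ?K1" for k
  proof -
    have "{P\<in>QM a b (int M). dd P = k} = {}" using that by auto
    then show ?thesis unfolding c_def by (simp only: card.empty)
  qed
  have "(\<Sum>k\<in>?K1. f k * of_nat (c k)) = (\<Sum>k\<in>?K1 \<union> ?K2. f k * of_nat (c k))"
    by (rule sum.mono_neutral_left) (use fK1 fK2 z2 in auto)
  also have "\<dots> = (\<Sum>k\<in>?K2. f k * of_nat (c k))"
    by (rule sum.mono_neutral_right) (use fK1 fK2 z1 in auto)
  finally show ?thesis using L R by simp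
qed


definition vab :: "nat \<Rightarrow> nat \<Rightarrow> nat \<times> nat \<Rightarrow> nat" where
  "vab a b x = (if snd x = 0 then a * fst x + b else a * fst x - b)"
definition wz :: "complex \<Rightarrow> nat \<times> nat \<Rightarrow> complex" where
  "wz z x = (if snd x = 0 then z else inverse z)"

lemma int_vab: "x \<in> O1 \<Longrightarrow> a \<ge> 1 \<Longrightarrow> b \<le> 1 \<Longrightarrow> int (vab a b x) = tt a b x"
proof -
  assume x: "x \<in> O1" and a: "a \<ge> 1" and b: "b \<le> 1"
  have f: "fst x \<ge> 1" using fst_pos x by simp
  have "b \<le> a * fst x" using a f b by (metis le_trans nat_mult_1 mult_le_mono)
  then show ?thesis by (auto simp: vab_def tt_def sgn01_def of_nat_diff)
qed

lemma vab_ge: "x \<in> O1 \<Longrightarrow> a \<ge> 1 \<Longrightarrow> b \<le> 1 \<Longrightarrow> (b = 0 \<or> a \<ge> 2) \<Longrightarrow> fst x \<le> vab a b x"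
proof -
  assume x: "x \<in> O1" and a: "a \<ge> 1" and b: "b \<le> 1" and ab: "b = 0 \<or> a \<ge> 2"
  have f: "fst x \<ge> 1" using fst_pos x by simp
  have m: "fst x \<le> a * fst x" using a by simp
  have m2: "fst x \<le> a * fst x + b" using m by linarith
  show ?thesis
  proof (cases "snd x = 0")
    case True then show ?thesis using m2 by (simp add: vab_def)
  next
    case False
    show ?thesis
    proof (cases "b = 0")
      case True then show ?thesis using m by (simp add: vab_def)
    next
      case bF: False
      then have "a \<ge> 2" "b = 1" using ab b by auto
      have v: "vab a b x = a * fst x - 1" using False \<open>b = 1\<close> by (simp add: vab_def)
      have "2 * fst x \<le> a * fst x" using mult_le_mono1[OF \<open>a \<ge> 2\<close>, of "fst x"] by simp
      then show ?thesis using v f by linarith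
    qed
  qed
qed

lemma wfs_vab:
  assumes a: "a \<ge> 1" and b: "b \<le> 1" and ab: "b = 0 \<or> a \<ge> 2"
  shows "wfs O1 (vab a b)"
  unfolding wfs_def
proof (intro conjI ballI allI)
  fix u assume u: "u \<in> O1"
  show "0 < vab a b u" using vab_ge[OF u a b ab] fst_pos[OF u] by simp
next
  fix n
  have "{u\<in>O1. vab a b u \<le> n} \<subseteq> {0..n} \<times> {0..1}"
  proof
    fix u assume u: "u \<in> {u\<in>O1. vab a b u \<le> n}"
    then have "fst u \<le> n" using vab_ge[OF _ a b ab, of u] by auto
    moreover have "snd u \<le> 1" using u O1_iff[of u] by auto
    ultimately show "u \<in> {0..n} \<times> {0..1}" by (cases u) auto
  qed
  then show "finite {u\<in>O1. vab a b u \<le> n}" by (rule finite_subset) simp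
qed

lemma prod_wz: "P \<in> QQ \<Longrightarrow> z \<noteq> 0 \<Longrightarrow> prod (wz z) P = z powi dd P"
proof -
  assume P: "P \<in> QQ" and z: "z \<noteq> 0"
  have "finite P" using P by (simp add: QQ_iff)
  then show ?thesis
  proof (induction P rule: finite_induct)
    case empty then show ?case by (simp add: dd_def)
  next
    case (insert x F)
    have "dd (insert x F) = dd F + sgn01 x" using dd_ss_insert[OF insert(1,2)] by simp
    then have "z powi dd (insert x F) = z powi dd F * z powi sgn01 x"
      using z by (simp add: power_int_add)
    also have "z powi sgn01 x = wz z x" by (simp add: sgn01_def wz_def power_int_minus)
    finally show ?case using insert by simp
  qed
qed

lemma gfw_O1_nth:
  assumes a: "a \<ge> 1" and b: "b \<le> 1" and ab: "b = 0 \<or> a \<ge> 2" and z: "z \<noteq> 0"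
  shows "gfw O1 (vab a b) (wz z) $ M = (\<Sum>P\<in>QM a b (int M). z powi dd P)"
proof -
  have "{P. P \<subseteq> O1 \<and> finite P \<and> sum (vab a b) P = M} = QM a b (int M)"
  proof (intro set_eqI)
    fix P
    show "P \<in> {P. P \<subseteq> O1 \<and> finite P \<and> sum (vab a b) P = M} \<longleftrightarrow> P \<in> QM a b (int M)"
    proof (cases "P \<subseteq> O1 \<and> finite P")
      case True
      have e: "int (sum (vab a b) P) = int a * ss P + int b * dd P"
        unfolding tt_sum of_nat_sum by (rule sum.cong) (use True int_vab a b in auto)
      have "sum (vab a b) P = M \<longleftrightarrow> int (sum (vab a b) P) = int M" by (rule of_nat_eq_iff[symmetric])
      also have "\<dots> \<longleftrightarrow> int a * ss P + int b * dd P = int M" by (simp only: e)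
      finally have "sum (vab a b) P = M \<longleftrightarrow> int a * ss P + int b * dd P = int M" .
      then show ?thesis using True by (simp add: QM_def QQ_iff)
    next
      case False then show ?thesis by (auto simp: QM_def QQ_iff)
    qed
  qed
  moreover have "prod (wz z) P = z powi dd P" if "P \<in> QM a b (int M)" for P
    using prod_wz[of P z] that z by (simp add: QM_def)
  ultimately show ?thesis using gfw_nth[OF wfs_vab[OF a b ab], of "wz z" M] by simp
qed

theorem core:
  assumes a: "a \<ge> 1" and b: "b \<le> 1" and ab: "b = 0 \<or> a \<ge> 2" and z: "z \<noteq> 0"
  shows "gfw O1 (vab a b) (wz z) = Th a b (\<lambda>k. z powi k) * dil a GG"
  by (rule fps_ext) (simp add: gfw_O1_nth[OF assms] core_sum[OF a b])



definition gfs :: "nat set \<Rightarrow> complex \<Rightarrow> complex fps" where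
  "gfs U w = gfw U id (\<lambda>_. w)"

definition Pos :: "nat set" where "Pos = {n. 0 < n}"
definition Odd :: "nat set" where "Odd = {n. odd n}"
definition Ev :: "nat set" where "Ev = {n. even n \<and> 0 < n}"

lemma wfs_id: "U \<subseteq> Pos \<Longrightarrow> wfs U id"
  unfolding wfs_def Pos_def
proof (intro conjI ballI allI)
  fix n assume "U \<subseteq> {n. 0 < n}"
  show "finite {u \<in> U. id u \<le> n}" by (rule finite_subset[of _ "{0..n}"]) auto
qed auto

lemma gfw_cong: "(\<And>u. u \<in> U \<Longrightarrow> w u = w' u) \<Longrightarrow> gfw U v w = gfw U v w'"
  using gfw_reindex[of id U U v v w' w] by (simp add: bij_betw_def)

lemma gfs_union: "U \<subseteq> Pos \<Longrightarrow> V \<subseteq> Pos \<Longrightarrow> U \<inter> V = {} \<Longrightarrow> gfs (U \<union> V) w = gfs U w * gfs V w"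
  unfolding gfs_def by (rule gfw_union) (auto intro: wfs_id)

lemma gfs_dil:
  assumes "U \<subseteq> Pos" "c > 0"
  shows "gfs ((\<lambda>n. c * n) ` U) w = dil c (gfs U w)"
proof -
  have "gfs ((\<lambda>n. c * n) ` U) w = gfw U (\<lambda>n. c * id n) (\<lambda>_. w)"
    unfolding gfs_def by (rule gfw_reindex) (use assms in \<open>auto simp: bij_betw_def inj_on_def\<close>)
  also have "\<dots> = dil c (gfs U w)" unfolding gfs_def
    by (rule gfw_dil) (use assms(2) wfs_id[OF assms(1)] in \<open>simp_all add: id_def\<close>)
  finally show ?thesis .
qed

lemma gfs_term:
  assumes U: "U \<subseteq> Pos" and w: "w1 + w2 = 0" "w1 * w2 = w3"
  shows "gfs U w1 * gfs U w2 = gfs ((\<lambda>n. 2 * n) ` U) w3"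
proof -
  have "gfs U w1 * gfs U w2 = gfw U (\<lambda>n. 2 * id n) (\<lambda>_. w3)"
    unfolding gfs_def
  proof (rule gfw_termwise)
    show "wfs U id" using U wfs_id by auto
    show "wfs U (\<lambda>n. 2 * id n)" using wfs_mult[OF wfs_id[OF U], of 2] by simp
    fix u assume "u \<in> U"
    have "fac (\<lambda>_. w1) id u * fac (\<lambda>_. w2) id u
        = 1 + fps_const (w1 + w2) * fps_X ^ u + fps_const (w1 * w2) * fps_X ^ (2 * u)"
      by (simp add: fac_def algebra_simps power_add mult_2 mult_2_right flip: fps_const_add fps_const_mult)
    also have "\<dots> = fac (\<lambda>_. w3) (\<lambda>n. 2 * id n) u" using w by (simp add: fac_def)
    finally show "fac (\<lambda>_. w1) id u * fac (\<lambda>_. w2) id u = fac (\<lambda>_. w3) (\<lambda>n. 2 * id n) u" .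
  qed auto
  also have "\<dots> = gfs ((\<lambda>n. 2 * n) ` U) w3"
    unfolding gfs_def by (rule gfw_reindex[symmetric]) (use U in \<open>auto simp: bij_betw_def inj_on_def\<close>)
  finally show ?thesis .
qed

lemma gfs_nth0: "U \<subseteq> Pos \<Longrightarrow> gfs U w $ 0 = 1"
  unfolding gfs_def by (rule gfw_nth0) (rule wfs_id)


lemma odd_gt0: "odd (x::nat) \<Longrightarrow> 0 < x" by presburger

lemma Odd_Pos: "Odd \<subseteq> Pos" by (auto simp: Odd_def Pos_def odd_gt0)
lemma Ev_Pos: "Ev \<subseteq> Pos" by (auto simp: Ev_def Pos_def)

lemma O1_split: "O1 = (Odd \<times> {0}) \<union> (Odd \<times> {1})"
  by (auto simp: O1_def Odd_def)

lemma wfs_single: "wfs (Odd \<times> {c}) fst"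
  unfolding wfs_def
proof (intro conjI ballI allI)
  fix u assume "u \<in> Odd \<times> {c}"
  then show "0 < fst u" by (auto simp: Odd_def intro: odd_pos)
next
  fix n show "finite {u \<in> Odd \<times> {c}. fst u \<le> n}"
    by (rule finite_subset[of _ "{0..n} \<times> {c}"]) auto
qed

lemma gfw_single: "gfw (Odd \<times> {c}) fst (\<lambda>_. w) = gfs Odd w"
  unfolding gfs_def by (rule gfw_reindex[symmetric]) (auto simp: bij_betw_def inj_on_def)

lemma gfO_split: "gfw O1 fst (wz z) = gfs Odd z * gfs Odd (inverse z)"
proof -
  have "gfw O1 fst (wz z) = gfw (Odd \<times> {0}) fst (wz z) * gfw (Odd \<times> {1}) fst (wz z)"
    unfolding O1_split by (rule gfw_union) (auto simp: wfs_single)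
  also have "gfw (Odd \<times> {0}) fst (wz z) = gfw (Odd \<times> {0::nat}) fst (\<lambda>_. z)"
    by (rule gfw_cong) (auto simp: wz_def)
  also have "gfw (Odd \<times> {1}) fst (wz z) = gfw (Odd \<times> {1::nat}) fst (\<lambda>_. inverse z)"
    by (rule gfw_cong) (auto simp: wz_def)
  finally show ?thesis by (simp add: gfw_single)
qed

lemma vab10: "vab 1 0 = fst"
  by (rule ext) (simp add: vab_def)

lemma gfO_core: "z \<noteq> 0 \<Longrightarrow> gfw O1 fst (wz z) = Th 1 0 (\<lambda>k. z powi k) * GG"
proof -
  assume z: "z \<noteq> 0"
  have "gfw O1 (vab 1 0) (wz z) = Th 1 0 (\<lambda>k. z powi k) * dil 1 GG"
    by (rule core) (use z in auto)
  then show ?thesis unfolding vab10 dil_1 .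
qed

definition EE :: "complex fps" where "EE = gfs Ev (-1)"

lemma img_mult: "(\<lambda>n::nat. c * n) ` ((\<lambda>n. d * n) ` U) = (\<lambda>n. (c * d) * n) ` U"
  by (auto simp: image_image mult.assoc)

lemma Ev_split: "Ev = ((\<lambda>n. 2 * n) ` Odd) \<union> ((\<lambda>n. 4 * n) ` Pos)"
proof (intro set_eqI iffI)
  fix x assume "x \<in> Ev"
  then have x: "even x" "0 < x" by (auto simp: Ev_def)
  show "x \<in> ((\<lambda>n. 2 * n) ` Odd) \<union> ((\<lambda>n. 4 * n) ` Pos)"
  proof (cases "odd (x div 2)")
    case True
    then have "x = 2 * (x div 2)" "x div 2 \<in> Odd" using x by (auto simp: Odd_def)
    then show ?thesis by blast
  next
    case False
    then have "x = 4 * (x div 4)" "x div 4 \<in> Pos" using x by (auto simp: Pos_def) presburger+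
    then show ?thesis by blast
  qed
qed (auto simp: Ev_def Odd_def Pos_def odd_gt0)

lemma Pos4_split: "(\<lambda>n. 4 * n) ` Pos = ((\<lambda>n. 4 * n) ` Odd) \<union> ((\<lambda>n. 8 * n) ` Pos)"
proof (intro set_eqI iffI)
  fix x assume "x \<in> (\<lambda>n. 4 * n) ` Pos"
  then obtain m where m: "x = 4 * m" "0 < m" by (auto simp: Pos_def)
  show "x \<in> ((\<lambda>n. 4 * n) ` Odd) \<union> ((\<lambda>n. 8 * n) ` Pos)"
  proof (cases "odd m")
    case True then show ?thesis using m by (auto simp: Odd_def)
  next
    case False
    then have "x = 8 * (m div 2)" "m div 2 \<in> Pos" using m by (auto simp: Pos_def)
    then show ?thesis by blast
  qed
next
  fix x assume "x \<in> ((\<lambda>n. 4 * n) ` Odd) \<union> ((\<lambda>n. 8 * n) ` Pos)"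
  then show "x \<in> (\<lambda>n. 4 * n) ` Pos"
  proof
    assume "x \<in> (\<lambda>n. 4 * n) ` Odd"
    then show ?thesis using Odd_Pos by blast
  next
    assume "x \<in> (\<lambda>n. 8 * n) ` Pos"
    then obtain m where "x = 8 * m" "0 < m" by (auto simp: Pos_def)
    then have "x = 4 * (2 * m)" "2 * m \<in> Pos" by (auto simp: Pos_def)
    then show ?thesis by blast
  qed
qed

lemma Ev_eq: "Ev = (\<lambda>n. 2 * n) ` Pos"
proof (intro set_eqI iffI)
  fix x assume "x \<in> Ev"
  then have "x = 2 * (x div 2)" "x div 2 \<in> Pos" by (auto simp: Ev_def Pos_def)
  then show "x \<in> (\<lambda>n. 2 * n) ` Pos" by blast
qed (auto simp: Ev_def Pos_def)

lemma mult_img_Pos: "c > 0 \<Longrightarrow> U \<subseteq> Pos \<Longrightarrow> (\<lambda>n. c * n) ` U \<subseteq> Pos"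
  by (auto simp: Pos_def)

lemma Odd_disj: "((\<lambda>n. 2 * n) ` Odd) \<inter> ((\<lambda>n. 4 * n) ` Pos) = {}"
  by (auto simp: Odd_def)

lemma Odd_disj4: "((\<lambda>n. 4 * n) ` Odd) \<inter> ((\<lambda>n. 8 * n) ` Pos) = {}"
  by (auto simp: Odd_def)



lemma sgc: "(-1::complex) powi n = (if even n then 1 else -1)"
proof (cases "n \<ge> 0")
  case True
  then obtain m where "n = int m" using nonneg_eq_int by blast
  then show ?thesis by (simp add: power_int_def)
next
  case False
  then obtain m where m: "n = - int m" by (metis add.inverse_inverse neg_0_le_iff_le nonneg_eq_int linorder_le_cases)
  then show ?thesis by (simp add: power_int_minus power_int_def)
qed

lemma ipow: "\<i> powi k = (if even k then (-1) powi (k div 2) else \<i> * (-1) powi (k div 2))"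
proof -
  have e: "\<i> powi (2 * m) = (-1) powi m" for m :: int
    by (simp add: power_int_mult)
  show ?thesis
  proof (cases "even k")
    case True
    then have "k = 2 * (k div 2)" by simp
    then show ?thesis using True e by (metis)
  next
    case False
    then have k: "k = 2 * (k div 2) + 1" by presburger
    have "\<i> powi (2 * (k div 2) + 1) = \<i> powi (2 * (k div 2)) * \<i>" by (rule power_int_add_1) simp
    then show ?thesis using False e k by (metis mult.commute)
  qed
qed

lemma Th10_nth: "Th 1 0 f $ M = (\<Sum>k\<in>{k::int. k^2 = int M}. f k)"
  by (simp add: Th_def)

lemma sq_finite: "finite {k::int. k^2 = int M}"
  by (rule finite_subset[OF _ quad_finite[of 1 0 "int M"]]) auto

lemma sum_odd_zero:
  fixes A :: "int set"
  assumes fin: "finite A" and cl: "\<And>k. k \<in> A \<Longrightarrow> - k \<in> A" and f: "\<And>k. k \<in> A \<Longrightarrow> f (- k) = - (f k :: complex)"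
  shows "sum f A = 0"
proof -
  have "sum f A = sum (\<lambda>k. f (- k)) A"
    by (rule sum.reindex_bij_witness[of _ uminus uminus]) (use cl in auto)
  also have "\<dots> = - sum f A" using f by (simp add: sum_negf)
  finally show ?thesis by simp
qed

lemma Thi: "Th 1 0 (\<lambda>k. \<i> powi k) = dil 4 (Th 1 0 (\<lambda>k. (-1) powi k))"
proof (rule fps_ext)
  fix M
  let ?A = "{k::int. k^2 = int M}"
  have fA: "finite ?A" by (rule sq_finite)
  have "Th 1 0 (\<lambda>k. \<i> powi k) $ M = (\<Sum>k\<in>?A. \<i> powi k)" by (rule Th10_nth)
  also have "(\<Sum>k\<in>?A. \<i> powi k) = (\<Sum>k\<in>{k\<in>?A. even k} \<union> {k\<in>?A. odd k}. \<i> powi k)"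
    by (rule sum.cong) auto
  also have "\<dots> = (\<Sum>k\<in>{k\<in>?A. even k}. \<i> powi k) + (\<Sum>k\<in>{k\<in>?A. odd k}. \<i> powi k)"
    by (rule sum.union_disjoint) (use fA in auto)
  also have "(\<Sum>k\<in>{k\<in>?A. odd k}. \<i> powi k) = 0"
  proof (rule sum_odd_zero)
    show "finite {k\<in>?A. odd k}" using fA by simp
    fix k assume k: "k \<in> {k\<in>?A. odd k}"
    then show "- k \<in> {k\<in>?A. odd k}" by simp
    have o: "odd k" using k by simp
    then have "(- k) div 2 = - (k div 2) - 1" by presburger
    moreover have "even (- (k div 2) - 1) \<longleftrightarrow> odd (k div 2)" by presburger
    ultimately show "\<i> powi (- k) = - (\<i> powi k)" using o by (simp add: ipow sgc)
  qed
  also have "(\<Sum>k\<in>{k\<in>?A. even k}. \<i> powi k) = dil 4 (Th 1 0 (\<lambda>k. (-1) powi k)) $ M"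
  proof (cases "4 dvd M")
    case True
    then obtain m where m: "M = 4 * m" by blast
    have "{k\<in>?A. even k} = (\<lambda>j. 2 * j) ` {j::int. j^2 = int m}"
    proof (intro set_eqI iffI)
      fix k assume k: "k \<in> {k\<in>?A. even k}"
      then have "k = 2 * (k div 2)" by simp
      moreover have "(k div 2)^2 = int m"
      proof -
        have "(2 * (k div 2))^2 = int M" using k \<open>k = 2 * (k div 2)\<close> by simp
        then show ?thesis using m by (simp add: power_mult_distrib)
      qed
      ultimately show "k \<in> (\<lambda>j. 2 * j) ` {j::int. j^2 = int m}" by blast
    next
      fix k assume "k \<in> (\<lambda>j. 2 * j) ` {j::int. j^2 = int m}"
      then show "k \<in> {k\<in>?A. even k}" using m by (auto simp: power_mult_distrib)
    qed
    then have "(\<Sum>k\<in>{k\<in>?A. even k}. \<i> powi k) = (\<Sum>j\<in>{j::int. j^2 = int m}. \<i> powi (2 * j))"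
      by (simp add: sum.reindex inj_on_def)
    also have "\<dots> = (\<Sum>j\<in>{j::int. j^2 = int m}. (-1) powi j)"
      by (simp add: ipow)
    also have "\<dots> = Th 1 0 (\<lambda>k. (-1) powi k) $ m"
      by (rule Th10_nth[symmetric])
    also have "\<dots> = dil 4 (Th 1 0 (\<lambda>k. (-1) powi k)) $ M"
      using m by (simp add: dil_nth)
    finally show ?thesis .
  next
    case False
    have e: "{k\<in>?A. even k} = {}"
    proof -
      have "\<not> (k^2 = int M \<and> even k)" for k
      proof
        assume h: "k^2 = int M \<and> even k"
        then obtain j where "k = 2 * j" by blast
        then have "int M = 4 * j^2" using h by (simp add: power_mult_distrib)
        then have "4 dvd M" by presburger
        then show False using False by simp
      qed
      then show ?thesis by auto
    qed
    show ?thesis unfolding e using False by (simp add: dil_nth)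
  qed
  finally show "Th 1 0 (\<lambda>k. \<i> powi k) $ M = dil 4 (Th 1 0 (\<lambda>k. (-1) powi k)) $ M"
    by simp
qed


abbreviation img :: "nat \<Rightarrow> nat set \<Rightarrow> nat set" where "img c U \<equiv> (\<lambda>n. c * n) ` U"

lemma img_Pos: "c > 0 \<Longrightarrow> U \<subseteq> Pos \<Longrightarrow> img c U \<subseteq> Pos"
  by (auto simp: Pos_def)

lemma stepA: "gfw O1 fst (wz \<i>) = gfs (img 2 Odd) 1"
proof -
  have "gfw O1 fst (wz \<i>) = gfs Odd \<i> * gfs Odd (- \<i>)" by (simp add: gfO_split)
  also have "\<dots> = gfs (img 2 Odd) 1" by (rule gfs_term) (use Odd_Pos in auto)
  finally show ?thesis .
qed

lemma stepB: "gfw O1 fst (wz (-1)) = gfs Odd (-1) * gfs Odd (-1)"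
  by (simp add: gfO_split)

lemma stepC: "EE = gfs (img 2 Odd) (-1) * gfs (img 4 Pos) (-1)"
  unfolding EE_def by (subst Ev_split, rule gfs_union) (use Odd_Pos img_Pos Odd_disj in auto)

lemma stepD: "gfs (img 2 Odd) 1 * gfs (img 2 Odd) (-1) = gfs (img 4 Odd) (-1)"
proof -
  have "gfs (img 2 Odd) 1 * gfs (img 2 Odd) (-1) = gfs (img 2 (img 2 Odd)) (-1)"
    by (rule gfs_term) (use Odd_Pos img_Pos in auto)
  also have "img 2 (img 2 Odd) = img 4 Odd" by (simp add: img_mult)
  finally show ?thesis .
qed

lemma stepE: "gfs (img 4 Pos) (-1) = gfs (img 4 Odd) (-1) * gfs (img 8 Pos) (-1)"
  by (subst Pos4_split, rule gfs_union) (use Odd_Pos img_Pos Odd_disj4 in auto)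

lemma stepF1: "dil 4 (gfs Odd (-1)) = gfs (img 4 Odd) (-1)"
  by (rule gfs_dil[symmetric]) (use Odd_Pos in auto)

lemma stepF2: "dil 4 EE = gfs (img 8 Pos) (-1)"
proof -
  have "dil 4 EE = gfs (img 4 Ev) (-1)" unfolding EE_def by (rule gfs_dil[symmetric]) (use Ev_Pos in auto)
  also have "img 4 Ev = img 8 Pos" unfolding Ev_eq by (simp add: img_mult)
  finally show ?thesis .
qed

definition Phi :: "complex fps" where "Phi = GG * EE"

lemma GG0: "GG $ 0 = 1" by (simp add: GG_def Nk00)
lemma EE0: "EE $ 0 = 1" unfolding EE_def by (rule gfs_nth0[OF Ev_Pos])

lemma dil_fix_one:
  assumes c: "c \<ge> 2" and F: "dil c F = F" and F0: "F $ 0 = 1"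
  shows "F = (1 :: complex fps)"
proof -
  have "F $ n = (if n = 0 then 1 else 0)" for n
  proof (induction n rule: less_induct)
    case (less n)
    show ?case
    proof (cases "n = 0")
      case True then show ?thesis using F0 by simp
    next
      case False
      have "F $ n = dil c F $ n" using F by simp
      also have "\<dots> = (if c dvd n then F $ (n div c) else 0)" by (simp add: dil_nth)
      also have "\<dots> = 0"
      proof (cases "c dvd n")
        case True
        then obtain m where m: "n = c * m" by blast
        then have "m \<noteq> 0" using False by auto
        moreover have "m < n" using m c \<open>m \<noteq> 0\<close> by simp
        ultimately show ?thesis using less[of m] m c True by simp
      qed simp
      finally show ?thesis using False by simp
    qed
  qed
  then show ?thesis by (intro fps_ext) simp
qed

lemma Phi_one: "Phi = 1"
proof -
  define W where "W = gfs (img 2 Odd) 1 * EE"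
  have W1: "W = gfs (img 4 Odd) (-1) * gfs (img 4 Odd) (-1) * gfs (img 8 Pos) (-1)"
    unfolding W_def stepC
    by (simp add: mult.assoc[symmetric] stepD) (simp add: stepE mult.assoc)
  have W2: "dil 4 (gfw O1 fst (wz (-1))) * dil 4 EE = W"
    unfolding W1 stepB by (simp add: dil_mult stepF1 stepF2)
  have W0: "W $ 0 = 1"
    unfolding W_def by (simp add: EE0 gfs_nth0 img_Pos Odd_Pos)
  have gi0: "gfw O1 fst (wz \<i>) = Th 1 0 (\<lambda>k. \<i> powi k) * GG" by (rule gfO_core) simp
  have gi: "gfw O1 fst (wz \<i>) = dil 4 (Th 1 0 (\<lambda>k. (-1) powi k)) * GG"
    using gi0 unfolding Thi .
  have gm: "gfw O1 fst (wz (-1)) = Th 1 0 (\<lambda>k. (-1) powi k) * GG"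
    using gfO_core[of "-1"] by simp
  have "W * dil 4 Phi = gfw O1 fst (wz \<i>) * EE * dil 4 GG * dil 4 EE"
    unfolding W_def Phi_def stepA by (simp add: dil_mult mult_ac)
  also have "\<dots> = GG * EE * (dil 4 (gfw O1 fst (wz (-1))) * dil 4 EE)"
    unfolding gi gm by (simp add: dil_mult mult_ac)
  also have "\<dots> = W * Phi" unfolding W2 Phi_def by (simp add: mult_ac)
  finally have "W * dil 4 Phi = W * Phi" .
  moreover have "W \<noteq> 0" using W0 by auto
  ultimately have "dil 4 Phi = Phi" by simp
  moreover have "Phi $ 0 = 1" by (simp add: Phi_def GG0 EE0)
  ultimately show ?thesis by (intro dil_fix_one[of 4]) auto
qed


definition W6 :: "nat set" where "W6 = {n. n mod 6 = 2 \<or> n mod 6 = 4}"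
definition gi6 :: "nat \<Rightarrow> nat \<times> nat" where
  "gi6 m = (if m mod 6 = 4 then ((m - 1) div 3, 0) else ((m + 1) div 3, 1))"

lemma ar1: "odd (n::nat) \<Longrightarrow> (3 * n + 1) mod 6 = 4 \<and> (3 * n + 1 - 1) div 3 = n \<and> (3 * n - 1) mod 6 = 2 \<and> (3 * n - 1 + 1) div 3 = n"
proof -
  assume "odd n"
  then obtain t where n: "n = 2 * t + 1" by (elim oddE) simp
  have "3 * n - 1 = 6 * t + 2" "3 * n + 1 = 6 * t + 4" using n by simp_all
  moreover have "(6 * t + 2) mod 6 = 2" "(6 * t + 4) mod 6 = 4" by presburger+
  ultimately show ?thesis using n by simp
qed

lemma ar2: "(m::nat) mod 6 = 4 \<Longrightarrow> 3 * ((m - 1) div 3) + 1 = m \<and> odd ((m - 1) div 3)"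
proof -
  assume "m mod 6 = 4"
  then obtain t where "m = 6 * t + 4" by (metis mod_div_mult_eq add.commute mult.commute)
  then show ?thesis by simp
qed

lemma ar3: "(m::nat) mod 6 = 2 \<Longrightarrow> 3 * ((m + 1) div 3) - 1 = m \<and> odd ((m + 1) div 3)"
proof -
  assume "m mod 6 = 2"
  then obtain t where "m = 6 * t + 2" by (metis mod_div_mult_eq add.commute mult.commute)
  then show ?thesis by simp
qed

lemma bij_W6: "bij_betw (vab 3 1) O1 W6"
proof (rule bij_betw_byWitness[where f' = gi6])
  show "\<forall>x\<in>O1. gi6 (vab 3 1 x) = x"
  proof
    fix x assume x: "x \<in> O1"
    obtain n c where xe: "x = (n, c)" by (cases x)
    have n: "odd n" and c: "c = 0 \<or> c = 1" using x xe by (auto simp: O1_iff)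
    note a = ar1[OF n]
    show "gi6 (vab 3 1 x) = x"
    proof (cases "c = 0")
      case True
      then show ?thesis using a xe by (simp add: vab_def gi6_def)
    next
      case False
      then have c1: "c = 1" using c by simp
      then show ?thesis using a xe by (simp add: vab_def gi6_def)
    qed
  qed
  show "\<forall>m\<in>W6. vab 3 1 (gi6 m) = m"
  proof
    fix m assume m: "m \<in> W6"
    show "vab 3 1 (gi6 m) = m"
    proof (cases "m mod 6 = 4")
      case True
      then show ?thesis using ar2[OF True] by (simp add: vab_def gi6_def)
    next
      case False
      then have m2: "m mod 6 = 2" using m by (simp add: W6_def)
      then show ?thesis using ar3[OF m2] False by (simp add: vab_def gi6_def)
    qed
  qed
  show "vab 3 1 ` O1 \<subseteq> W6"
  proof
    fix y assume "y \<in> vab 3 1 ` O1"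
    then obtain x where x: "x \<in> O1" "y = vab 3 1 x" by blast
    obtain n c where xe: "x = (n, c)" by (cases x)
    have n: "odd n" and c: "c = 0 \<or> c = 1" using x xe by (auto simp: O1_iff)
    note a = ar1[OF n]
    show "y \<in> W6" using a x xe c by (auto simp: vab_def W6_def)
  qed
  show "gi6 ` W6 \<subseteq> O1"
  proof
    fix y assume "y \<in> gi6 ` W6"
    then obtain m where m: "m \<in> W6" "y = gi6 m" by blast
    show "y \<in> O1"
    proof (cases "m mod 6 = 4")
      case True
      then show ?thesis using ar2[OF True] m by (simp add: gi6_def O1_iff)
    next
      case False
      then have m2: "m mod 6 = 2" using m by (simp add: W6_def)
      then show ?thesis using ar3[OF m2] False m by (simp add: gi6_def O1_iff)
    qed
  qed
qed

lemma l1: "even (x::nat) \<Longrightarrow> x mod 6 \<noteq> 0 \<Longrightarrow> x mod 6 = 2 \<or> x mod 6 = 4" by presburger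
lemma l2: "(x::nat) mod 6 = 0 \<Longrightarrow> x = 3 * (x div 3) \<and> even (x div 3)" by presburger
lemma l3: "(x::nat) mod 6 = 2 \<or> x mod 6 = 4 \<Longrightarrow> even x \<and> x > 0" by presburger
lemma l4: "even (y::nat) \<Longrightarrow> (3 * y) mod 6 = 0" by presburger

lemma W6_Pos: "W6 \<subseteq> Pos" by (auto simp: W6_def Pos_def)

lemma Ev_split6: "Ev = W6 \<union> img 3 Ev"
proof (intro set_eqI iffI)
  fix x assume "x \<in> Ev"
  then have x: "even x" "0 < x" by (auto simp: Ev_def)
  show "x \<in> W6 \<union> img 3 Ev"
  proof (cases "x mod 6 = 0")
    case True
    note l = l2[OF True]
    then have "x div 3 \<noteq> 0" using x by auto
    then have "x = 3 * (x div 3)" "x div 3 \<in> Ev" using l by (auto simp: Ev_def)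
    then show ?thesis by blast
  next
    case False
    then have "x \<in> W6" using l1[OF x(1) False] by (simp add: W6_def)
    then show ?thesis by blast
  qed
next
  fix x assume "x \<in> W6 \<union> img 3 Ev"
  then show "x \<in> Ev"
  proof
    assume "x \<in> W6" then show ?thesis using l3 by (auto simp: W6_def Ev_def)
  next
    assume "x \<in> img 3 Ev"
    then obtain y where "x = 3 * y" "even y" "0 < y" by (auto simp: Ev_def)
    then show ?thesis by (auto simp: Ev_def)
  qed
qed

lemma W6_disj: "W6 \<inter> img 3 Ev = {}"
proof -
  have "x \<notin> W6" if "x \<in> img 3 Ev" for x
  proof -
    from that obtain y where y: "y \<in> Ev" "x = 3 * y" by blast
    then have "even y" by (simp add: Ev_def)
    then have "x mod 6 = 0" using l4 y by simp
    then show ?thesis by (simp add: W6_def)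
  qed
  then show ?thesis by blast
qed

definition P5 :: "complex fps" where "P5 = Th 3 1 (\<lambda>k. (-1) powi k)"

lemma EE_P5: "EE = P5"
proof -
  have "gfs W6 (-1) = gfw O1 (vab 3 1) (\<lambda>_. -1)"
    unfolding gfs_def by (rule gfw_reindex[OF bij_W6]) auto
  also have "\<dots> = gfw O1 (vab 3 1) (wz (-1))" by (rule gfw_cong) (simp add: wz_def)
  also have "\<dots> = P5 * dil 3 GG" unfolding P5_def by (rule core) auto
  finally have g6: "gfs W6 (-1) = P5 * dil 3 GG" .
  have "EE = gfs W6 (-1) * dil 3 EE"
    unfolding EE_def
    by (subst Ev_split6, subst gfs_union) (use W6_Pos img_Pos Ev_Pos W6_disj gfs_dil in auto)
  also have "\<dots> = P5 * dil 3 Phi" unfolding g6 Phi_def by (simp add: dil_mult mult_ac)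
  also have "\<dots> = P5" by (simp add: Phi_one dil_one)
  finally show ?thesis .
qed

lemma GG_P5: "GG * P5 = 1"
  using Phi_one by (simp add: Phi_def EE_P5)



definition RR :: "int \<Rightarrow> (int \<times> int) set" where
  "RR M = {p. (fst p)^2 + fst p * snd p + 3 * (snd p)^2 = M}"

lemma abs_le_sq: "\<bar>x::int\<bar> \<le> x^2"
proof (cases "x = 0")
  case False
  then have "1 \<le> \<bar>x\<bar>" by simp
  then have "\<bar>x\<bar> * 1 \<le> \<bar>x\<bar> * \<bar>x\<bar>" by (rule mult_left_mono) simp
  then show ?thesis by (simp add: power2_eq_square)
qed simp

lemma RR_finite: "finite (RR M)"
proof (rule finite_subset)
  show "RR M \<subseteq> {-(3*\<bar>M\<bar>)..3*\<bar>M\<bar>} \<times> {-\<bar>M\<bar>..\<bar>M\<bar>}"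
  proof
    fix p assume p: "p \<in> RR M"
    obtain a b where pe: "p = (a, b)" by (cases p)
    have e: "4 * M = (2*a+b)^2 + 11 * b^2" using p pe by (simp add: RR_def power2_eq_square algebra_simps)
    have b2: "b^2 \<le> M" using e by (smt (verit) zero_le_power2)
    have x2: "(2*a+b)^2 \<le> 4 * M" using e by (smt (verit) zero_le_power2)
    have "\<bar>b\<bar> \<le> \<bar>M\<bar>" using abs_le_sq[of b] b2 by linarith
    moreover have "\<bar>2*a+b\<bar> \<le> 4 * \<bar>M\<bar>" using abs_le_sq[of "2*a+b"] x2 by linarith
    then have "\<bar>a\<bar> \<le> 3 * \<bar>M\<bar>" using \<open>\<bar>b\<bar> \<le> \<bar>M\<bar>\<close> by linarith
    ultimately show "p \<in> {-(3*\<bar>M\<bar>)..3*\<bar>M\<bar>} \<times> {-\<bar>M\<bar>..\<bar>M\<bar>}" using pe by auto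
  qed
qed simp

definition sg :: "int \<Rightarrow> complex" where "sg n = (if even n then 1 else -1)"

lemma sum_filter: "finite A \<Longrightarrow> (\<Sum>x\<in>{x\<in>A. P x}. f x) = (\<Sum>x\<in>A. if P x then f x else 0)"
  by (rule sum.inter_filter)

lemma arith_main:
  "(\<Sum>p\<in>RR M. (if even (snd p) then 1 - sg (fst p) else 0))
   - (\<Sum>p\<in>RR M. (if odd (snd p) then 1 else 0))
   = 4 * (\<Sum>p\<in>RR M. (if fst p mod 6 = 1 then sg (snd p) else 0))"
proof -
  let ?R = "RR M"
  have fR: "finite ?R" by (rule RR_finite)
  define kap where "kap p = (fst p + snd p, - snd p)" for p :: "int \<times> int"
  define nu where "nu p = (- fst p, - snd p)" for p :: "int \<times> int"
  define iota where "iota p = (- fst p, snd p + fst p div 3)" for p :: "int \<times> int"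
  have kapR: "kap p \<in> ?R" if "p \<in> ?R" for p
    using that by (cases p) (simp add: kap_def RR_def power2_eq_square algebra_simps)
  have kap2: "kap (kap p) = p" for p by (cases p) (simp add: kap_def)
  have nuR: "nu p \<in> ?R" if "p \<in> ?R" for p
    using that by (cases p) (simp add: nu_def RR_def power2_eq_square algebra_simps)
  have nu2: "nu (nu p) = p" for p by (cases p) (simp add: nu_def)
  have iotaR: "iota p \<in> ?R" if "p \<in> ?R" "3 dvd fst p" for p
  proof -
    obtain a b where pe: "p = (a, b)" by (cases p)
    have "3 dvd a" using that(2) pe by simp
    then obtain c where c: "a = 3 * c" by (elim dvdE)
    show ?thesis using that pe c by (simp add: iota_def RR_def power2_eq_square algebra_simps)
  qed
  have iota2: "iota (iota p) = p" if "3 dvd fst p" for p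
  proof -
    obtain a b where pe: "p = (a, b)" by (cases p)
    have "3 dvd a" using that pe by simp
    then obtain c where c: "a = 3 * c" by (elim dvdE)
    show ?thesis using pe c by (simp add: iota_def)
  qed
  have e3: "(\<Sum>p\<in>?R. (if odd (snd p) \<and> even (fst p) then 1 else 0::complex))
          = (\<Sum>p\<in>?R. (if odd (snd p) \<and> odd (fst p) then 1 else 0))"
  proof (rule sum.reindex_bij_witness[of _ kap kap])
    show "\<And>p. p \<in> ?R \<Longrightarrow> kap (kap p) = p" using kap2 by auto
    show "\<And>p. p \<in> ?R \<Longrightarrow> kap p \<in> ?R" using kapR by auto
    fix p assume "p \<in> ?R"
    obtain a b where pe: "p = (a, b)" by (cases p)
    show "(if odd (snd (kap p)) \<and> odd (fst (kap p)) then 1 else 0::complex) =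
          (if odd (snd p) \<and> even (fst p) then 1 else 0)"
      using pe by (simp add: kap_def)
  qed (use kap2 kapR in auto)
  have e4: "(\<Sum>p\<in>?R. (if fst p mod 6 = 1 then sg (snd p) else 0))
          = (\<Sum>p\<in>?R. (if fst p mod 6 = 5 then sg (snd p) else 0))"
  proof (rule sum.reindex_bij_witness[of _ nu nu])
    show "\<And>p. p \<in> ?R \<Longrightarrow> nu (nu p) = p" using nu2 by auto
    show "\<And>p. p \<in> ?R \<Longrightarrow> nu p \<in> ?R" using nuR by auto
    fix p assume "p \<in> ?R"
    obtain a b where pe: "p = (a, b)" by (cases p)
    have m: "(- a) mod 6 = 5 \<longleftrightarrow> a mod 6 = 1" by presburger
    show "(if fst (nu p) mod 6 = 5 then sg (snd (nu p)) else 0) =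
          (if fst p mod 6 = 1 then sg (snd p) else 0)"
      using pe m by (simp add: nu_def sg_def)
  qed (use nu2 nuR in auto)
  have e5: "(\<Sum>p\<in>?R. (if odd (fst p) \<and> 3 dvd fst p then sg (snd p) else 0)) = 0"
  proof -
    let ?S = "{p\<in>?R. odd (fst p) \<and> 3 dvd fst p}"
    have s1: "(\<Sum>p\<in>?R. (if odd (fst p) \<and> 3 dvd fst p then sg (snd p) else 0)) = (\<Sum>p\<in>?S. sg (snd p))"
      by (rule sum_filter[OF fR, symmetric])
    have iS: "iota p \<in> ?S \<and> iota (iota p) = p \<and> - sg (snd (iota p)) = sg (snd p)" if p: "p \<in> ?S" for p
    proof -
      obtain a b where pe: "p = (a, b)" by (cases p)
      have "3 dvd a" using p pe by simp
      then obtain c where c: "a = 3 * c" by (elim dvdE)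
      have oc: "odd c" using p pe c by auto
      have "iota p \<in> ?R" using iotaR[of p] p by simp
      then have "iota p \<in> ?S" using p pe c by (simp add: iota_def)
      moreover have "iota (iota p) = p" using iota2 p by simp
      moreover have "- sg (snd (iota p)) = sg (snd p)" using pe c oc by (simp add: iota_def sg_def)
      ultimately show ?thesis by blast
    qed
    have "(\<Sum>p\<in>?S. sg (snd p)) = (\<Sum>p\<in>?S. - sg (snd p))"
      by (rule sum.reindex_bij_witness[of _ iota iota]) (use iS in auto)
    then have "(\<Sum>p\<in>?S. sg (snd p)) = - (\<Sum>p\<in>?S. sg (snd p))"
      by (simp add: sum_negf)
    then have "(\<Sum>p\<in>?S. sg (snd p)) = 0" by simp
    then show ?thesis using s1 by simp
  qed
  have pw: "(if even (snd p) then 1 - sg (fst p) else 0)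
      - (if odd (snd p) then 1 else 0)
      - 4 * (if fst p mod 6 = 1 then sg (snd p) else 0)
    = ((if odd (snd p) \<and> odd (fst p) then 1 else 0) - (if odd (snd p) \<and> even (fst p) then 1 else 0))
      + 2 * ((if fst p mod 6 = 5 then sg (snd p) else 0) - (if fst p mod 6 = 1 then sg (snd p) else 0))
      + 2 * (if odd (fst p) \<and> 3 dvd fst p then sg (snd p) else 0)" for p :: "int \<times> int"
  proof -
    obtain a b where pe: "p = (a, b)" by (cases p)
    have c6: "odd a \<Longrightarrow> a mod 6 = 1 \<or> a mod 6 = 3 \<or> a mod 6 = 5" by presburger
    have d3: "odd a \<Longrightarrow> 3 dvd a \<longleftrightarrow> a mod 6 = 3" by presburger
    have ev: "even a \<Longrightarrow> a mod 6 \<noteq> 1 \<and> a mod 6 \<noteq> 5" by presburger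
    show ?thesis
    proof (cases "even a")
      case True then show ?thesis using pe ev by (simp add: sg_def)
    next
      case False
      then show ?thesis using pe c6 d3 by (auto simp: sg_def)
    qed
  qed
  have "(\<Sum>p\<in>?R. (if even (snd p) then 1 - sg (fst p) else 0))
   - (\<Sum>p\<in>?R. (if odd (snd p) then 1 else 0))
   - 4 * (\<Sum>p\<in>?R. (if fst p mod 6 = 1 then sg (snd p) else 0))
   = (\<Sum>p\<in>?R. (if even (snd p) then 1 - sg (fst p) else 0)
      - (if odd (snd p) then 1 else 0)
      - 4 * (if fst p mod 6 = 1 then sg (snd p) else 0))"
    by (simp add: sum_subtractf sum_distrib_left)
  also have "\<dots> = (\<Sum>p\<in>?R. ((if odd (snd p) \<and> odd (fst p) then 1 else 0) - (if odd (snd p) \<and> even (fst p) then 1 else 0))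
      + 2 * ((if fst p mod 6 = 5 then sg (snd p) else 0) - (if fst p mod 6 = 1 then sg (snd p) else 0))
      + 2 * (if odd (fst p) \<and> 3 dvd fst p then sg (snd p) else 0))"
    by (rule sum.cong[OF refl]) (rule pw)
  also have "\<dots> = 0"
    using e3 e4 e5 by (simp add: sum.distrib sum_subtractf flip: sum_distrib_left)
  finally show ?thesis by simp
qed


lemma Th_nth: "Th a b f $ n = (\<Sum>k\<in>{k. int a * k^2 + int b * k = int n}. f k)"
  by (simp add: Th_def)

lemma dil_Th_nth:
  assumes c: "c \<ge> 1"
  shows "dil c (Th a b g) $ n = (\<Sum>k\<in>{k. int c * (int a * k^2 + int b * k) = int n}. g k)"
proof (cases "c dvd n")
  case True
  then obtain m where m: "n = c * m" by blast
  have "{k. int c * (int a * k^2 + int b * k) = int n} = {k. int a * k^2 + int b * k = int m}"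
    using m c by auto
  then show ?thesis using m c by (simp add: dil_nth Th_nth)
next
  case False
  have "\<not> (int c * (int a * k^2 + int b * k) = int n)" for k
  proof
    assume h: "int c * (int a * k^2 + int b * k) = int n"
    then have "int c dvd int n" unfolding h[symmetric] by simp
    then show False using False by simp
  qed
  then have e: "{k. int c * (int a * k^2 + int b * k) = int n} = {}" by auto
  show ?thesis unfolding e using False by (simp add: dil_nth)
qed

lemma Th_mult_nth:
  assumes a: "a \<ge> 1" and b: "b \<le> 1"
  shows "(Th a b f * H) $ M = (\<Sum>j\<in>{j. int a * j^2 + int b * j \<le> int M}. f j * H $ nat (int M - (int a * j^2 + int b * j)))"
proof -
  let ?A = "\<lambda>i::nat. {k::int. int a * k^2 + int b * k = int i}"
  have fA: "finite (?A i)" for i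
    by (rule finite_subset[OF _ quad_finite[OF a b, of "int i"]]) auto
  have "(Th a b f * H) $ M = (\<Sum>i=0..M. (\<Sum>k\<in>?A i. f k) * H $ (M - i))"
    by (simp add: fps_mult_nth Th_nth)
  also have "\<dots> = (\<Sum>i=0..M. \<Sum>k\<in>?A i. f k * H $ nat (int M - (int a * k^2 + int b * k)))"
  proof (rule sum.cong[OF refl])
    fix i assume i: "i \<in> {0..M}"
    have "(\<Sum>k\<in>?A i. f k) * H $ (M - i) = (\<Sum>k\<in>?A i. f k * H $ (M - i))"
      by (simp add: sum_distrib_right)
    also have "\<dots> = (\<Sum>k\<in>?A i. f k * H $ nat (int M - (int a * k^2 + int b * k)))"
    proof (rule sum.cong[OF refl])
      fix k assume k: "k \<in> ?A i"
      have "nat (int M - int i) = M - i" using i by simp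
      then show "f k * H $ (M - i) = f k * H $ nat (int M - (int a * k^2 + int b * k))" using k by simp
    qed
    finally show "(\<Sum>k\<in>?A i. f k) * H $ (M - i) = (\<Sum>k\<in>?A i. f k * H $ nat (int M - (int a * k^2 + int b * k)))" .
  qed
  also have "\<dots> = (\<Sum>k\<in>(\<Union>i\<in>{0..M}. ?A i). f k * H $ nat (int M - (int a * k^2 + int b * k)))"
    by (rule sum.UNION_disjoint[symmetric]) (use fA in auto)
  also have "(\<Union>i\<in>{0..M}. ?A i) = {j. int a * j^2 + int b * j \<le> int M}"
  proof (intro set_eqI iffI)
    fix j assume "j \<in> {j. int a * j^2 + int b * j \<le> int M}"
    moreover have q: "0 \<le> int a * j^2 + int b * j" by (rule quad_bound(2)[OF a b])
    define i where "i = nat (int a * j^2 + int b * j)"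
    have i1: "int i = int a * j^2 + int b * j" using q by (simp add: i_def)
    ultimately have i: "int i = int a * j^2 + int b * j" "i \<le> M" using i1 by auto
    then show "j \<in> (\<Union>i\<in>{0..M}. ?A i)" by (intro UN_I[of i]) auto
  qed auto
  finally show ?thesis .
qed

lemma theta2:
  assumes a1: "a1 \<ge> 1" and b1: "b1 \<le> 1" and a2: "a2 \<ge> 1" and b2: "b2 \<le> 1" and c: "c \<ge> 1"
  shows "(Th a1 b1 f * dil c (Th a2 b2 g)) $ M =
     (\<Sum>p\<in>{p. int a1 * (fst p)^2 + int b1 * fst p + int c * (int a2 * (snd p)^2 + int b2 * snd p) = int M}.
        f (fst p) * g (snd p))"
proof -
  let ?Q1 = "\<lambda>j. int a1 * j^2 + int b1 * j" and ?Q2 = "\<lambda>k. int a2 * k^2 + int b2 * k"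
  let ?J = "{j. ?Q1 j \<le> int M}"
  let ?K = "\<lambda>j. {k. int c * ?Q2 k = int M - ?Q1 j}"
  have fJ: "finite ?J" by (rule quad_finite[OF a1 b1])
  have fK: "finite (?K j)" for j
  proof (rule finite_subset[OF _ quad_finite[OF a2 b2, of "\<bar>int M - ?Q1 j\<bar>"]])
    show "?K j \<subseteq> {k. ?Q2 k \<le> \<bar>int M - ?Q1 j\<bar>}"
    proof
      fix k assume k: "k \<in> ?K j"
      have q: "0 \<le> ?Q2 k" by (rule quad_bound(2)[OF a2 b2])
      have "?Q2 k \<le> int c * ?Q2 k" using c q by (simp add: mult_le_cancel_right1)
      then show "k \<in> {k. ?Q2 k \<le> \<bar>int M - ?Q1 j\<bar>}" using k by auto
    qed
  qed
  have "(Th a1 b1 f * dil c (Th a2 b2 g)) $ M = (\<Sum>j\<in>?J. f j * dil c (Th a2 b2 g) $ nat (int M - ?Q1 j))"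
    by (rule Th_mult_nth[OF a1 b1])
  also have "\<dots> = (\<Sum>j\<in>?J. \<Sum>k\<in>?K j. f j * g k)"
  proof (rule sum.cong[OF refl])
    fix j assume j: "j \<in> ?J"
    have "dil c (Th a2 b2 g) $ nat (int M - ?Q1 j) = (\<Sum>k\<in>?K j. g k)"
      using j by (simp add: dil_Th_nth[OF c])
    then show "f j * dil c (Th a2 b2 g) $ nat (int M - ?Q1 j) = (\<Sum>k\<in>?K j. f j * g k)"
      by (simp add: sum_distrib_left)
  qed
  also have "\<dots> = (\<Sum>p\<in>Sigma ?J ?K. f (fst p) * g (snd p))"
    by (subst sum.Sigma) (use fJ fK in \<open>auto simp: case_prod_beta\<close>)
  also have "Sigma ?J ?K = {p. ?Q1 (fst p) + int c * ?Q2 (snd p) = int M}"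
  proof (intro set_eqI iffI)
    fix p assume p: "p \<in> {p. ?Q1 (fst p) + int c * ?Q2 (snd p) = int M}"
    have "0 \<le> ?Q2 (snd p)" by (rule quad_bound(2)[OF a2 b2])
    then have "0 \<le> int c * ?Q2 (snd p)" by simp
    then show "p \<in> Sigma ?J ?K" using p by (cases p) auto
  qed auto
  finally show ?thesis by (simp add: algebra_simps)
qed



definition Tp :: "complex fps" where "Tp = Th 1 0 (\<lambda>k. 1)"
definition Tm :: "complex fps" where "Tm = Th 1 0 sg"
definition Psi :: "complex fps" where "Psi = Th 1 1 (\<lambda>k. 1)"

lemma Th_cong: "(\<And>k. f k = g k) \<Longrightarrow> Th a b f = Th a b g"
  by (simp add: Th_def)

lemma sg_powi: "(-1::complex) powi k = sg k" by (simp add: sgc sg_def)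

lemma P5_sg: "P5 = Th 3 1 sg" unfolding P5_def by (rule Th_cong) (rule sg_powi)
lemma sg_add: "sg (x + y) = sg x * sg y" by (auto simp: sg_def)
lemma sg_diff: "sg (x - y) = sg x * sg y" by (auto simp: sg_def)

lemma c1: "(Tp * dil 11 Tp) $ M = (\<Sum>p\<in>{p. (fst p)^2 + 11 * (snd p)^2 = int M}. 1)"
  using theta2[of 1 0 1 0 11 "\<lambda>k. 1" "\<lambda>k. 1" M] unfolding Tp_def by simp

lemma c2: "(Tm * dil 11 Tm) $ M = (\<Sum>p\<in>{p. (fst p)^2 + 11 * (snd p)^2 = int M}. sg (fst p) * sg (snd p))"
  using theta2[of 1 0 1 0 11 sg sg M] unfolding Tm_def by simp

lemma c3: "(Psi * dil 11 Psi) $ M = (\<Sum>p\<in>{p. (fst p)^2 + fst p + 11 * ((snd p)^2 + snd p) = int M}. 1)"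
  using theta2[of 1 1 1 1 11 "\<lambda>k. 1" "\<lambda>k. 1" M] unfolding Psi_def by simp

lemma c5: "(P5 * dil 11 P5) $ M = (\<Sum>p\<in>{p. 3 * (fst p)^2 + fst p + 11 * (3 * (snd p)^2 + snd p) = int M}. sg (fst p) * sg (snd p))"
  using theta2[of 3 1 3 1 11 sg sg M] unfolding P5_sg by (simp add: algebra_simps)


lemma b1: "(\<Sum>p\<in>{p. (fst p)^2 + 11 * (snd p)^2 = M}. 1 - sg (fst p) * sg (snd p))
   = (\<Sum>p\<in>RR M. (if even (snd p) then 1 - sg (fst p) else 0))"
proof -
  have "(\<Sum>p\<in>{p. (fst p)^2 + 11 * (snd p)^2 = M}. 1 - sg (fst p) * sg (snd p))
      = (\<Sum>p\<in>{p\<in>RR M. even (snd p)}. 1 - sg (fst p))"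
  proof (rule sum.reindex_bij_witness[of _ "\<lambda>q. (fst q + snd q div 2, snd q div 2)" "\<lambda>p. (fst p - snd p, 2 * snd p)"])
    fix p assume p: "p \<in> {p. (fst p)^2 + 11 * (snd p)^2 = M}"
    obtain j k where pe: "p = (j, k)" by (cases p)
    show "(fst (fst p - snd p, 2 * snd p) + snd (fst p - snd p, 2 * snd p) div 2, snd (fst p - snd p, 2 * snd p) div 2) = p"
      using pe by simp
    show "(fst p - snd p, 2 * snd p) \<in> {p\<in>RR M. even (snd p)}"
      using p pe by (simp add: RR_def power2_eq_square algebra_simps)
    show "1 - sg (fst (fst p - snd p, 2 * snd p)) = 1 - sg (fst p) * sg (snd p)"
      using pe by (simp add: sg_diff)
  next
    fix q assume q: "q \<in> {p\<in>RR M. even (snd p)}"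
    obtain a b where qe: "q = (a, b)" by (cases q)
    obtain t where t: "b = 2 * t" using q qe by auto
    show "(fst (fst q + snd q div 2, snd q div 2) - snd (fst q + snd q div 2, snd q div 2),
           2 * snd (fst q + snd q div 2, snd q div 2)) = q"
      using qe t by simp
    show "(fst q + snd q div 2, snd q div 2) \<in> {p. (fst p)^2 + 11 * (snd p)^2 = M}"
      using q qe t by (simp add: RR_def power2_eq_square algebra_simps)
  qed
  also have "\<dots> = (\<Sum>p\<in>RR M. (if even (snd p) then 1 - sg (fst p) else 0))"
    by (rule sum_filter[OF RR_finite])
  finally show ?thesis .
qed

lemma b3: "(\<Sum>p\<in>{p. (fst p)^2 + fst p + 11 * ((snd p)^2 + snd p) = M - 3}. 1::complex)
   = (\<Sum>p\<in>RR M. (if odd (snd p) then 1 else 0))"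
proof -
  have "(\<Sum>p\<in>{p. (fst p)^2 + fst p + 11 * ((snd p)^2 + snd p) = M - 3}. 1::complex)
      = (\<Sum>p\<in>{p\<in>RR M. odd (snd p)}. 1)"
  proof (rule sum.reindex_bij_witness[of _ "\<lambda>q. (fst q + snd q div 2, snd q div 2)" "\<lambda>p. (fst p - snd p, 2 * snd p + 1)"])
    fix p assume p: "p \<in> {p. (fst p)^2 + fst p + 11 * ((snd p)^2 + snd p) = M - 3}"
    obtain j k where pe: "p = (j, k)" by (cases p)
    show "(fst (fst p - snd p, 2 * snd p + 1) + snd (fst p - snd p, 2 * snd p + 1) div 2, snd (fst p - snd p, 2 * snd p + 1) div 2) = p"
      using pe by simp
    show "(fst p - snd p, 2 * snd p + 1) \<in> {p\<in>RR M. odd (snd p)}"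
      using p pe by (simp add: RR_def power2_eq_square algebra_simps)
  next
    fix q assume q: "q \<in> {p\<in>RR M. odd (snd p)}"
    obtain a b where qe: "q = (a, b)" by (cases q)
    obtain t where t: "b = 2 * t + 1" using q qe by (auto elim: oddE)
    show "(fst (fst q + snd q div 2, snd q div 2) - snd (fst q + snd q div 2, snd q div 2),
           2 * snd (fst q + snd q div 2, snd q div 2) + 1) = q"
      using qe t by simp
    show "(fst q + snd q div 2, snd q div 2) \<in> {p. (fst p)^2 + fst p + 11 * ((snd p)^2 + snd p) = M - 3}"
      using q qe t by (simp add: RR_def power2_eq_square algebra_simps)
  qed simp
  also have "\<dots> = (\<Sum>p\<in>RR M. (if odd (snd p) then 1 else 0))"
    by (rule sum_filter[OF RR_finite])
  finally show ?thesis .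
qed

lemma b5: "(\<Sum>p\<in>{p. 3 * (fst p)^2 + fst p + 11 * (3 * (snd p)^2 + snd p) = M - 1}. sg (fst p) * sg (snd p))
   = (\<Sum>p\<in>RR M. (if fst p mod 6 = 1 then sg (snd p) else 0))"
proof -
  have "(\<Sum>p\<in>{p. 3 * (fst p)^2 + fst p + 11 * (3 * (snd p)^2 + snd p) = M - 1}. sg (fst p) * sg (snd p))
      = (\<Sum>p\<in>{p\<in>RR M. fst p mod 6 = 1}. sg (snd p))"
  proof (rule sum.reindex_bij_witness[of _ "\<lambda>q. (snd q + fst q div 6, fst q div 6)" "\<lambda>p. (6 * snd p + 1, fst p - snd p)"])
    fix p assume p: "p \<in> {p. 3 * (fst p)^2 + fst p + 11 * (3 * (snd p)^2 + snd p) = M - 1}"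
    obtain j k where pe: "p = (j, k)" by (cases p)
    show "(snd (6 * snd p + 1, fst p - snd p) + fst (6 * snd p + 1, fst p - snd p) div 6, fst (6 * snd p + 1, fst p - snd p) div 6) = p"
      using pe by simp
    show "(6 * snd p + 1, fst p - snd p) \<in> {p\<in>RR M. fst p mod 6 = 1}"
      using p pe by (simp add: RR_def power2_eq_square algebra_simps)
    show "sg (snd (6 * snd p + 1, fst p - snd p)) = sg (fst p) * sg (snd p)"
      using pe by (simp add: sg_diff)
  next
    fix q assume q: "q \<in> {p\<in>RR M. fst p mod 6 = 1}"
    obtain a b where qe: "q = (a, b)" by (cases q)
    have am: "a mod 6 = 1" using q qe by simp
    define t where "t = a div 6"
    have t: "a = 6 * t + 1" unfolding t_def using am div_mult_mod_eq[of a 6] by linarith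
    show "(6 * snd (snd q + fst q div 6, fst q div 6) + 1, fst (snd q + fst q div 6, fst q div 6) - snd (snd q + fst q div 6, fst q div 6)) = q"
      using qe t by simp
    show "(snd q + fst q div 6, fst q div 6) \<in> {p. 3 * (fst p)^2 + fst p + 11 * (3 * (snd p)^2 + snd p) = M - 1}"
      using q qe t by (simp add: RR_def power2_eq_square algebra_simps)
  qed
  also have "\<dots> = (\<Sum>p\<in>RR M. (if fst p mod 6 = 1 then sg (snd p) else 0))"
    by (rule sum_filter[OF RR_finite])
  finally show ?thesis .
qed


lemma x3: "(fps_X^3 * (Psi * dil 11 Psi)) $ M = (\<Sum>p\<in>{p. (fst p)^2 + fst p + 11 * ((snd p)^2 + snd p) = int M - 3}. 1::complex)"
proof (cases "M < 3")
  case True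
  have "\<not> ((fst p)^2 + fst p + 11 * ((snd p)^2 + snd p) = int M - 3)" for p :: "int \<times> int"
  proof -
    have "0 \<le> int 1 * (fst p)^2 + int 1 * fst p" by (rule quad_bound(2)) auto
    moreover have "0 \<le> int 1 * (snd p)^2 + int 1 * snd p" by (rule quad_bound(2)) auto
    ultimately show ?thesis using True by simp
  qed
  then have e: "{p. (fst p)^2 + fst p + 11 * ((snd p)^2 + snd p) = int M - 3} = {}" by auto
  show ?thesis unfolding e using True by (simp add: fps_X_power_mult_nth)
next
  case False
  then have "int (M - 3) = int M - 3" by simp
  then show ?thesis using False c3[of "M - 3"] by (simp add: fps_X_power_mult_nth)
qed

lemma x5: "(fps_const 4 * fps_X * (P5 * dil 11 P5)) $ M = 4 * (\<Sum>p\<in>{p. 3 * (fst p)^2 + fst p + 11 * (3 * (snd p)^2 + snd p) = int M - 1}. sg (fst p) * sg (snd p))"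
proof (cases "M = 0")
  case True
  have "\<not> (3 * (fst p)^2 + fst p + 11 * (3 * (snd p)^2 + snd p) = int M - 1)" for p :: "int \<times> int"
  proof -
    have "0 \<le> int 3 * (fst p)^2 + int 1 * fst p" by (rule quad_bound(2)) auto
    moreover have "0 \<le> int 3 * (snd p)^2 + int 1 * snd p" by (rule quad_bound(2)) auto
    ultimately show ?thesis using True by simp
  qed
  then have e: "{p. 3 * (fst p)^2 + fst p + 11 * (3 * (snd p)^2 + snd p) = int M - 1} = {}" by auto
  show ?thesis unfolding e using True by (simp add: mult.assoc)
next
  case False
  then have "int (M - 1) = int M - 1" by simp
  moreover have "(fps_const 4 * fps_X * (P5 * dil 11 P5)) $ M = 4 * (P5 * dil 11 P5) $ (M - 1)"
    using False by (simp add: mult.assoc fps_X_mult_nth)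
  ultimately show ?thesis using c5[of "M - 1"] by simp
qed

lemma lattice: "Tp * dil 11 Tp - Tm * dil 11 Tm - fps_X^3 * (Psi * dil 11 Psi) = fps_const 4 * fps_X * (P5 * dil 11 P5)"
proof (rule fps_ext)
  fix M
  let ?D1 = "{p. (fst p)^2 + 11 * (snd p)^2 = int M}"
  have "(Tp * dil 11 Tp - Tm * dil 11 Tm) $ M = (\<Sum>p\<in>?D1. 1) - (\<Sum>p\<in>?D1. sg (fst p) * sg (snd p))"
    using c1[of M] c2[of M] by simp
  also have "\<dots> = (\<Sum>p\<in>?D1. 1 - sg (fst p) * sg (snd p))" by (simp add: sum_subtractf)
  also have "\<dots> = (\<Sum>p\<in>RR (int M). (if even (snd p) then 1 - sg (fst p) else 0))" by (rule b1)
  finally have L1: "(Tp * dil 11 Tp - Tm * dil 11 Tm) $ M = (\<Sum>p\<in>RR (int M). (if even (snd p) then 1 - sg (fst p) else 0))" .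
  have L3: "(fps_X^3 * (Psi * dil 11 Psi)) $ M = (\<Sum>p\<in>RR (int M). (if odd (snd p) then 1 else 0))"
    using x3[of M] b3[of "int M"] by simp
  have L5: "(fps_const 4 * fps_X * (P5 * dil 11 P5)) $ M = 4 * (\<Sum>p\<in>RR (int M). (if fst p mod 6 = 1 then sg (snd p) else 0))"
    using x5[of M] b5[of "int M"] by simp
  show "(Tp * dil 11 Tp - Tm * dil 11 Tm - fps_X^3 * (Psi * dil 11 Psi)) $ M = (fps_const 4 * fps_X * (P5 * dil 11 P5)) $ M"
    using L1 L3 L5 arith_main[of "int M"] by simp
qed



definition E1 :: "(nat \<times> nat) set" where "E1 = {(n, c). even n \<and> 0 < n \<and> c < 2}"
definition O1' :: "(nat \<times> nat) set" where "O1' = O1 - {(1,1)}"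
definition hE :: "nat \<times> nat \<Rightarrow> nat \<times> nat" where
  "hE u = (if snd u = 0 then (fst u + 1, 0) else (fst u - 1, 1))"
definition hEi :: "nat \<times> nat \<Rightarrow> nat \<times> nat" where
  "hEi u = (if snd u = 0 then (fst u - 1, 0) else (fst u + 1, 1))"

lemma E1_iff: "u \<in> E1 \<longleftrightarrow> even (fst u) \<and> 0 < fst u \<and> (snd u = 0 \<or> snd u = 1)"
  by (cases u) (auto simp: E1_def)

lemma O1'_iff: "u \<in> O1' \<longleftrightarrow> odd (fst u) \<and> (snd u = 0 \<or> snd u = 1) \<and> u \<noteq> (1,1)"
  by (auto simp: O1'_def O1_iff)

lemma bij_hE: "bij_betw hE O1' E1"
proof (rule bij_betw_byWitness[where f' = hEi])
  show "\<forall>u\<in>O1'. hEi (hE u) = u"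
  proof
    fix u assume u: "u \<in> O1'"
    obtain n c where ue: "u = (n, c)" by (cases u)
    have n: "odd n" and c: "c = 0 \<or> c = 1" and n1: "c = 1 \<longrightarrow> n \<noteq> 1" using u ue by (auto simp: O1'_iff)
    then have "c = 1 \<longrightarrow> n \<ge> 3" by presburger
    then show "hEi (hE u) = u" using ue c by (auto simp: hE_def hEi_def)
  qed
  show "\<forall>u\<in>E1. hE (hEi u) = u"
  proof
    fix u assume u: "u \<in> E1"
    obtain n c where ue: "u = (n, c)" by (cases u)
    have n: "even n" "0 < n" and c: "c = 0 \<or> c = 1" using u ue by (auto simp: E1_iff)
    then have "n \<ge> 2" by presburger
    then show "hE (hEi u) = u" using ue c by (auto simp: hE_def hEi_def)
  qed
  show "hE ` O1' \<subseteq> E1"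
  proof
    fix v assume "v \<in> hE ` O1'"
    then obtain u where u: "u \<in> O1'" "v = hE u" by blast
    obtain n c where ue: "u = (n, c)" by (cases u)
    have n: "odd n" and c: "c = 0 \<or> c = 1" and n1: "c = 1 \<longrightarrow> n \<noteq> 1" using u ue by (auto simp: O1'_iff)
    have a: "even (n + 1)" "c = 1 \<longrightarrow> even (n - 1) \<and> 0 < n - 1" using n n1 by presburger+
    show "v \<in> E1" using u ue c a by (auto simp: hE_def E1_iff)
  qed
  show "hEi ` E1 \<subseteq> O1'"
  proof
    fix v assume "v \<in> hEi ` E1"
    then obtain u where u: "u \<in> E1" "v = hEi u" by blast
    obtain n c where ue: "u = (n, c)" by (cases u)
    have n: "even n" "0 < n" and c: "c = 0 \<or> c = 1" using u ue by (auto simp: E1_iff)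
    have a: "odd (n - 1)" "odd (n + 1)" "n + 1 \<noteq> 1" using n by presburger+
    show "v \<in> O1'" using u ue c a by (auto simp: hEi_def O1'_iff)
  qed
qed

lemma fst_hE: "u \<in> O1' \<Longrightarrow> fst (hE u) = vab 1 1 u"
  by (auto simp: hE_def vab_def)

lemma wfs_O1': "wfs O1' (vab 1 1)"
  unfolding wfs_def
proof (intro conjI ballI allI)
  fix u assume u: "u \<in> O1'"
  obtain n c where ue: "u = (n, c)" by (cases u)
  have n: "odd n" and c: "c = 0 \<or> c = 1" and n1: "c = 1 \<longrightarrow> n \<noteq> 1" using u ue by (auto simp: O1'_iff)
  then have "c = 1 \<longrightarrow> n \<ge> 3" by presburger
  then show "0 < vab 1 1 u" using ue c by (auto simp: vab_def)
next
  fix m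
  have "{u\<in>O1'. vab 1 1 u \<le> m} \<subseteq> {0..m+1} \<times> {0..1}"
  proof
    fix u assume u: "u \<in> {u\<in>O1'. vab 1 1 u \<le> m}"
    obtain n c where ue: "u = (n, c)" by (cases u)
    have c: "c = 0 \<or> c = 1" using u ue by (auto simp: O1'_iff)
    have "n \<le> m + 1" using u ue c by (auto simp: vab_def)
    then show "u \<in> {0..m+1} \<times> {0..1}" using ue c by auto
  qed
  then show "finite {u\<in>O1'. vab 1 1 u \<le> m}" by (rule finite_subset) simp
qed

lemma card_QM11:
  "card (QM 1 1 (int M)) = 2 * card {P. P \<subseteq> O1' \<and> finite P \<and> sum (vab 1 1) P = M}"
proof -
  let ?A = "{P. P \<subseteq> O1' \<and> finite P \<and> sum (vab 1 1) P = M}"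
  have key: "int (sum (vab 1 1) P) = ss P + dd P" if "P \<subseteq> O1" for P
  proof -
    have "int (sum (vab 1 1) P) = sum (tt 1 1) P"
      unfolding of_nat_sum by (rule sum.cong) (use that int_vab in auto)
    then show ?thesis using tt_sum[of 1 P 1] by simp
  qed
  have A0: "?A = {P\<in>QM 1 1 (int M). (1,1) \<notin> P}"
  proof (intro set_eqI iffI)
    fix P assume P: "P \<in> ?A"
    then have "P \<subseteq> O1" "(1,1) \<notin> P" by (auto simp: O1'_def)
    then show "P \<in> {P\<in>QM 1 1 (int M). (1,1) \<notin> P}" using P key[of P] by (auto simp: QM_def QQ_iff)
  next
    fix P assume P: "P \<in> {P\<in>QM 1 1 (int M). (1,1) \<notin> P}"
    then have PO: "P \<subseteq> O1" "finite P" by (auto simp: QM_def QQ_iff)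
    then have "P \<subseteq> O1'" using P by (auto simp: O1'_def)
    moreover have h: "int (sum (vab 1 1) P) = int M" using key[OF PO(1)] P by (simp add: QM_def)
    then have "sum (vab 1 1) P = M" by (simp only: of_nat_eq_iff)
    ultimately show "P \<in> ?A" using PO by simp
  qed
  have A1: "{P\<in>QM 1 1 (int M). (1,1) \<in> P} = insert (1,1) ` {P\<in>QM 1 1 (int M). (1,1) \<notin> P}"
  proof (intro set_eqI iffI)
    fix P assume P: "P \<in> {P\<in>QM 1 1 (int M). (1,1) \<in> P}"
    let ?P' = "P - {(1,1)}"
    have fP: "finite ?P'" using P by (auto simp: QM_def QQ_iff)
    have "P = insert (1,1) ?P'" using P by auto
    moreover have "ss P + dd P = ss ?P' + dd ?P'"
      using dd_ss_insert[OF fP, of "(1,1)"] \<open>P = insert (1,1) ?P'\<close> by (auto simp: sgn01_def)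
    then have "?P' \<in> {P\<in>QM 1 1 (int M). (1,1) \<notin> P}" using P by (auto simp: QM_def QQ_iff)
    ultimately show "P \<in> insert (1,1) ` {P\<in>QM 1 1 (int M). (1,1) \<notin> P}" by blast
  next
    fix P assume "P \<in> insert (1,1) ` {P\<in>QM 1 1 (int M). (1,1) \<notin> P}"
    then obtain P' where P': "P' \<in> QM 1 1 (int M)" "(1,1) \<notin> P'" "P = insert (1,1) P'" by blast
    have fP: "finite P'" using P' by (auto simp: QM_def QQ_iff)
    have "ss P + dd P = ss P' + dd P'"
      using dd_ss_insert[OF fP P'(2)] P'(3) by (auto simp: sgn01_def)
    moreover have "(1,1) \<in> O1" by (simp add: O1_iff)
    ultimately show "P \<in> {P\<in>QM 1 1 (int M). (1,1) \<in> P}" using P' fP by (auto simp: QM_def QQ_iff)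
  qed
  have fQ: "finite (QM 1 1 (int M))" by (rule QM_finite) auto
  have "card (QM 1 1 (int M)) = card {P\<in>QM 1 1 (int M). (1,1) \<notin> P} + card {P\<in>QM 1 1 (int M). (1,1) \<in> P}"
  proof -
    have "QM 1 1 (int M) = {P\<in>QM 1 1 (int M). (1,1) \<notin> P} \<union> {P\<in>QM 1 1 (int M). (1,1) \<in> P}" by auto
    then show ?thesis using fQ card_Un_disjoint[of "{P\<in>QM 1 1 (int M). (1,1) \<notin> P}" "{P\<in>QM 1 1 (int M). (1,1) \<in> P}"]
      by (metis (no_types, lifting) disjoint_iff finite_Un mem_Collect_eq)
  qed
  also have "card {P\<in>QM 1 1 (int M). (1,1) \<in> P} = card {P\<in>QM 1 1 (int M). (1,1) \<notin> P}"
    unfolding A1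
  proof (rule card_image, rule inj_onI)
    fix x y assume "x \<in> {P\<in>QM 1 1 (int M). (1,1) \<notin> P}" "y \<in> {P\<in>QM 1 1 (int M). (1,1) \<notin> P}"
      "insert (1,1) x = insert (1,1) y"
    then show "x = y" by (metis (no_types, lifting) Diff_insert_absorb mem_Collect_eq)
  qed
  finally show ?thesis unfolding A0 by simp
qed

lemma dil_Suc0: "dil (Suc 0) f = f" using dil_1[of f] by simp

definition gE :: "complex fps" where "gE = gfw E1 fst (\<lambda>_. 1)"

lemma gE_Psi: "fps_const 2 * gE = Psi * GG"
proof (rule fps_ext)
  fix M
  have "gE = gfw O1' (vab 1 1) (\<lambda>_. 1)"
    unfolding gE_def by (rule gfw_reindex[OF bij_hE]) (auto simp: fst_hE)
  then have "gE $ M = of_nat (card {P. P \<subseteq> O1' \<and> finite P \<and> sum (vab 1 1) P = M})"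
    using gfw_nth[OF wfs_O1', of "\<lambda>_. 1::complex" M] by simp
  moreover have "(Psi * GG) $ M = of_nat (card (QM 1 1 (int M)))"
    using core_sum[where a=1 and b=1 and M=M and f="\<lambda>_. 1"] by (simp add: Psi_def dil_Suc0)
  ultimately show "(fps_const 2 * gE) $ M = (Psi * GG) $ M" using card_QM11[of M] by simp
qed


definition h11 :: "nat \<times> nat \<Rightarrow> nat \<times> nat" where "h11 u = (11 * fst u, snd u + 2)"

lemma inj_h11: "inj h11"
  by (auto simp: inj_def h11_def)

lemma wfs_h11:
  assumes w: "wfs U fst"
  shows "wfs (h11 ` U) fst"
  unfolding wfs_def
proof (intro conjI ballI allI)
  fix v assume "v \<in> h11 ` U"
  then obtain u where "u \<in> U" "v = h11 u" by blast
  then show "0 < fst v" using w by (auto simp: wfs_def h11_def)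
next
  fix n
  have "{v \<in> h11 ` U. fst v \<le> n} \<subseteq> h11 ` {u\<in>U. fst u \<le> n}"
  proof
    fix v assume "v \<in> {v \<in> h11 ` U. fst v \<le> n}"
    then obtain u where u: "u \<in> U" "v = h11 u" "fst (h11 u) \<le> n" by blast
    then have "fst u \<le> n" by (simp add: h11_def)
    then show "v \<in> h11 ` {u\<in>U. fst u \<le> n}" using u by blast
  qed
  moreover have "finite (h11 ` {u\<in>U. fst u \<le> n})" using w by (simp add: wfs_def)
  ultimately show "finite {v \<in> h11 ` U. fst v \<le> n}" by (rule finite_subset)
qed

lemma gfw_h11:
  assumes w: "wfs U fst"
  shows "gfw (h11 ` U) fst (\<lambda>_. c) = dil 11 (gfw U fst (\<lambda>_. c))"
proof -
  have "gfw (h11 ` U) fst (\<lambda>_. c) = gfw U (\<lambda>u. 11 * fst u) (\<lambda>_. c)"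
    by (rule gfw_reindex[of h11]) (use inj_h11 in \<open>auto simp: bij_betw_def h11_def inj_on_def\<close>)
  also have "\<dots> = dil 11 (gfw U fst (\<lambda>_. c))" by (rule gfw_dil[OF w]) simp
  finally show ?thesis .
qed

lemma wfs_O1: "wfs O1 fst"
proof -
  have "wfs O1 (vab 1 0)" by (rule wfs_vab) auto
  then show ?thesis unfolding vab10 .
qed

lemma wfs_E1: "wfs E1 fst"
  unfolding wfs_def
proof (intro conjI ballI allI)
  fix u assume "u \<in> E1" then show "0 < fst u" by (simp add: E1_iff)
next
  fix n show "finite {u \<in> E1. fst u \<le> n}"
    by (rule finite_subset[of _ "{0..n} \<times> {0..1}"]) (auto simp: E1_iff)
qed

lemma S_split: "S_elems = O1 \<union> h11 ` O1"
proof (intro set_eqI iffI)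
  fix u assume u: "u \<in> S_elems"
  obtain n c where ue: "u = (n, c)" by (cases u)
  have n: "odd n" "0 < n" and c: "c < (if 11 dvd n then 4 else 2)" using u ue by (auto simp: S_elems_def)
  show "u \<in> O1 \<union> h11 ` O1"
  proof (cases "c < 2")
    case True then show ?thesis using ue n by (simp add: O1_def)
  next
    case False
    then have d: "11 dvd n" and c4: "c < 4" using c by (auto split: if_splits)
    then obtain m where m: "n = 11 * m" by blast
    then have "odd m" using n by simp
    then have "(m, c - 2) \<in> O1" using c4 by (simp add: O1_def)
    moreover have "u = h11 (m, c - 2)" using ue m False by (simp add: h11_def)
    ultimately show ?thesis by blast
  qed
next
  fix u assume "u \<in> O1 \<union> h11 ` O1"
  then show "u \<in> S_elems"
  proof
    assume "u \<in> O1" then show ?thesis by (cases u) (auto simp: O1_def S_elems_def odd_gt0)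
  next
    assume "u \<in> h11 ` O1"
    then obtain v where v: "v \<in> O1" "u = h11 v" by blast
    obtain m c where ve: "v = (m, c)" by (cases v)
    have "odd m" "c < 2" using v ve by (auto simp: O1_def)
    then show ?thesis using v ve by (auto simp: h11_def S_elems_def odd_gt0)
  qed
qed

lemma T_split: "T_elems = E1 \<union> h11 ` E1"
proof (intro set_eqI iffI)
  fix u assume u: "u \<in> T_elems"
  obtain n c where ue: "u = (n, c)" by (cases u)
  have n: "even n" "0 < n" and c: "c < (if 11 dvd n then 4 else 2)" using u ue by (auto simp: T_elems_def)
  show "u \<in> E1 \<union> h11 ` E1"
  proof (cases "c < 2")
    case True then show ?thesis using ue n by (simp add: E1_def)
  next
    case False
    then have d: "11 dvd n" and c4: "c < 4" using c by (auto split: if_splits)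
    then obtain m where m: "n = 11 * m" by blast
    then have "even m" "0 < m" using n by auto
    then have "(m, c - 2) \<in> E1" using c4 by (simp add: E1_def)
    moreover have "u = h11 (m, c - 2)" using ue m False by (simp add: h11_def)
    ultimately show ?thesis by blast
  qed
next
  fix u assume "u \<in> E1 \<union> h11 ` E1"
  then show "u \<in> T_elems"
  proof
    assume "u \<in> E1" then show ?thesis by (cases u) (auto simp: E1_def T_elems_def)
  next
    assume "u \<in> h11 ` E1"
    then obtain v where v: "v \<in> E1" "u = h11 v" by blast
    obtain m c where ve: "v = (m, c)" by (cases v)
    have "even m" "0 < m" "c < 2" using v ve by (auto simp: E1_def)
    then show ?thesis using v ve by (auto simp: h11_def T_elems_def)
  qed
qed

lemma disj_h11: "U \<subseteq> {u. snd u < 2} \<Longrightarrow> U \<inter> h11 ` V = {}"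
  by (auto simp: h11_def)

lemma gfw_split:
  assumes w: "wfs U fst" and U2: "U \<subseteq> {u. snd u < 2}"
  shows "gfw (U \<union> h11 ` U) fst (\<lambda>_. c) = gfw U fst (\<lambda>_. c) * dil 11 (gfw U fst (\<lambda>_. c))"
proof -
  have "gfw (U \<union> h11 ` U) fst (\<lambda>_. c) = gfw U fst (\<lambda>_. c) * gfw (h11 ` U) fst (\<lambda>_. c)"
    by (rule gfw_union) (use w wfs_h11 disj_h11[OF U2] in auto)
  also have "gfw (h11 ` U) fst (\<lambda>_. c) = dil 11 (gfw U fst (\<lambda>_. c))" by (rule gfw_h11[OF w])
  finally show ?thesis .
qed

definition gS :: "complex \<Rightarrow> complex fps" where "gS c = gfw S_elems fst (\<lambda>_. c)"
definition gT :: "complex fps" where "gT = gfw T_elems fst (\<lambda>_. 1)"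

lemma gO_p: "gfw O1 fst (\<lambda>_. 1) = Tp * GG"
proof -
  have "gfw O1 fst (\<lambda>_. 1) = gfw O1 fst (wz 1)" by (rule gfw_cong) (simp add: wz_def)
  also have "\<dots> = Th 1 0 (\<lambda>k. 1 powi k) * GG" by (rule gfO_core) simp
  also have "Th 1 0 (\<lambda>k. 1 powi k) = Tp" unfolding Tp_def by (rule Th_cong) simp
  finally show ?thesis .
qed

lemma gO_m: "gfw O1 fst (\<lambda>_. -1) = Tm * GG"
proof -
  have "gfw O1 fst (\<lambda>_. -1) = gfw O1 fst (wz (-1))" by (rule gfw_cong) (simp add: wz_def)
  also have "\<dots> = Th 1 0 (\<lambda>k. (-1) powi k) * GG" by (rule gfO_core) simp
  also have "Th 1 0 (\<lambda>k. (-1) powi k) = Tm" unfolding Tm_def by (rule Th_cong) (rule sg_powi)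
  finally show ?thesis .
qed

lemma O1_snd: "O1 \<subseteq> {u. snd u < 2}" by (auto simp: O1_def)
lemma E1_snd: "E1 \<subseteq> {u. snd u < 2}" by (auto simp: E1_def)

lemma dil_const_mult: "c > 0 \<Longrightarrow> dil c (fps_const a * f) = fps_const a * dil c f"
  by (simp add: dil_mult dil_const)

lemma main_fps: "gS 1 - gS (-1) - fps_const 4 * fps_X^3 * gT = fps_const 4 * fps_X"
proof -
  have s1: "gS 1 = (Tp * dil 11 Tp) * (GG * dil 11 GG)"
    unfolding gS_def S_split gfw_split[OF wfs_O1 O1_snd] gO_p by (simp add: dil_mult mult_ac)
  have s2: "gS (-1) = (Tm * dil 11 Tm) * (GG * dil 11 GG)"
    unfolding gS_def S_split gfw_split[OF wfs_O1 O1_snd] gO_m by (simp add: dil_mult mult_ac)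
  have t: "fps_const 4 * gT = (Psi * dil 11 Psi) * (GG * dil 11 GG)"
  proof -
    have d2: "dil 11 (fps_const 2 * gE) = fps_const 2 * dil 11 gE" by (rule dil_const_mult) simp
    have c4: "fps_const (4::complex) = fps_const 2 * fps_const 2" by simp
    have "fps_const 4 * gT = fps_const 4 * (gE * dil 11 gE)"
      unfolding gT_def T_split gfw_split[OF wfs_E1 E1_snd] gE_def ..
    also have "\<dots> = (fps_const 2 * gE) * dil 11 (fps_const 2 * gE)"
      unfolding d2 c4 by (simp only: mult_ac)
    also have "\<dots> = (Psi * dil 11 Psi) * (GG * dil 11 GG)"
      unfolding gE_Psi by (simp add: dil_mult mult_ac)
    finally show ?thesis .
  qed
  have "gS 1 - gS (-1) - fps_const 4 * fps_X^3 * gT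
      = (Tp * dil 11 Tp - Tm * dil 11 Tm - fps_X^3 * (Psi * dil 11 Psi)) * (GG * dil 11 GG)"
  proof -
    have e: "fps_const 4 * fps_X^3 * gT = fps_X^3 * (fps_const 4 * gT)" by (simp only: mult_ac)
    show ?thesis unfolding e t s1 s2 by (simp add: algebra_simps)
  qed
  also have "\<dots> = fps_const 4 * fps_X * ((GG * P5) * dil 11 (GG * P5))"
    unfolding lattice by (simp add: dil_mult mult_ac)
  also have "\<dots> = fps_const 4 * fps_X" by (simp add: GG_P5 dil_one)
  finally show ?thesis .
qed

lemma wfs_S: "wfs S_elems fst"
  unfolding S_split wfs_def
  using wfs_O1 wfs_h11[OF wfs_O1] unfolding wfs_def
  by (auto simp: Collect_disj_eq conj_disj_distribR)

lemma wfs_T: "wfs T_elems fst"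
  unfolding T_split wfs_def
  using wfs_E1 wfs_h11[OF wfs_E1] unfolding wfs_def
  by (auto simp: Collect_disj_eq conj_disj_distribR)

lemma gS_nth: "gS c $ N = (\<Sum>P\<in>distinct_parts S_elems N. c ^ card P)"
  unfolding gS_def gfw_nth[OF wfs_S] distinct_parts_def by simp

lemma gT_nth: "gT $ N = of_nat (D_T N)"
  unfolding gT_def gfw_nth[OF wfs_T] D_T_def distinct_parts_def by simp

lemma finite_dp: "finite (distinct_parts S_elems N)"
proof -
  have "distinct_parts S_elems N \<subseteq> Pow {u\<in>S_elems. fst u \<le> N}"
  proof
    fix P assume P: "P \<in> distinct_parts S_elems N"
    have "fst u \<le> N" if "u \<in> P" for u
      using P that member_le_sum[of u P fst] by (auto simp: distinct_parts_def)
    then show "P \<in> Pow {u\<in>S_elems. fst u \<le> N}" using P by (auto simp: distinct_parts_def)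
  qed
  moreover have "finite {u\<in>S_elems. fst u \<le> N}" using wfs_S by (simp add: wfs_def)
  ultimately show ?thesis by (rule finite_subset[OF _ finite_Pow_iff[THEN iffD2]])
qed

lemma DS_nth: "(gS 1 - gS (-1)) $ N = 2 * of_nat (D_S N)"
proof -
  let ?A = "distinct_parts S_elems N"
  have "(gS 1 - gS (-1)) $ N = (\<Sum>P\<in>?A. 1 - (-1) ^ card P)"
    by (simp add: gS_nth sum_subtractf)
  also have "\<dots> = (\<Sum>P\<in>?A. if odd (card P) then 2 else 0)"
    by (rule sum.cong) auto
  also have "\<dots> = (\<Sum>P\<in>{P\<in>?A. odd (card P)}. 2)"
    by (rule sum_filter[symmetric]) (rule finite_dp)
  also have "\<dots> = 2 * of_nat (D_S N)" by (simp add: D_S_def)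
  finally show ?thesis .
qed

theorem theorem3p13:
  fixes N :: nat
  assumes "N \<ge> 3"
  shows "D_S N = 2 * D_T (N - 3)"
proof -
  have a: "(gS 1 - gS (-1) - fps_const 4 * fps_X^3 * gT) $ N = (fps_const 4 * fps_X :: complex fps) $ N"
    by (simp only: main_fps)
  have b: "(fps_const 4 * fps_X :: complex fps) $ N = 0" using assms by simp
  have g3: "(fps_const 4 * fps_X^3 * gT) $ N = 4 * of_nat (D_T (N - 3))"
    using assms by (simp add: mult.assoc fps_X_power_mult_nth gT_nth)
  have "(gS 1 - gS (-1)) $ N - (fps_const 4 * fps_X^3 * gT) $ N = 0"
    using a b by (simp only: fps_sub_nth)
  then have "2 * of_nat (D_S N) - 4 * of_nat (D_T (N - 3)) = (0::complex)"
    unfolding DS_nth g3 .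
  then have "of_nat (2 * D_S N) = (of_nat (4 * D_T (N - 3)) :: complex)" by simp
  then have "2 * D_S N = 4 * D_T (N - 3)" by (simp only: of_nat_eq_iff)
  then show ?thesis by simp
qed


end
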